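(* Let $F$ satisfy Assumption (A) and be of class AHa, with $k\mapsto F(\mathbf{x},k)$ in $L^1(\mathbb{R})$ for each $\mathbf{x}$ and $\mathbf{x}\mapsto\mathcal{F}_k[F(\mathbf{x},k)](1)$ in $L^1(\mathbb{R}^d)$. Then: (i) The solution $T^F$ of the spanning problem is of function type: $T^F(\varphi)=\int_{\mathbb{R}^d}\varphi(\mathbf{w})f(\mathbf{w})d\mathbf{w}$ for all $\varphi\in\mathcal{S}_e$, where $f(\mathbf{w})=-\frac12\mathcal{F}^{-1}_{\mathbf{x}}\big[\mathcal{F}_k[F(\mathbf{x},k)](1)\big](\mathbf{w})$. (ii) If $F(\mathbf{x},k)$ is $n$ times continuously differentiable in $k$ and $\partial_k^jF(\mathbf{x},\cdot)\in L^1(\mathbb{R})$ for $j\le n$, then $f(\mathbf{w})=-\frac12\mathcal{F}^{-1}_{\mathbf{x}}\big[\mathcal{F}_k[(-i)^n\partial^n_{k}F(\mathbf{x},k)](1)\big](\mathbf{w})$; in particular for $n=2$, $f(\mathbf{w})=\frac12\mathcal{F}^{-1}_{\mathbf{x}}\big[\mathcal{F}_k[\partial^2_{k}F(\mathbf{x},k)](1)\big](\mathbf{w})$. (iii) If $\partial_kF$ and $\partial^2_kF$ exist and are in $L^1(\mathbb{R})$ in $k$, and $\frac12\partial^2_kF(\mathbf{x},k)=\mathcal{R}g(\mathbf{x},k)$ for some $g\in L^1(\mathbb{R}^d)$, then $f=g$ almost everywhere.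
   Context: Fix $d\ge1$. Fourier transform $\mathcal{F}f(\mathbf{z})=\int f(\mathbf{s})e^{-i\mathbf{z}\cdot\mathbf{s}}d\mathbf{s}$, inverse $\mathcal{F}^{-1}f(\mathbf{s})=(2\pi)^{-q}\int f(\mathbf{z})e^{i\mathbf{s}\cdot\mathbf{z}}d\mathbf{z}$ on $\mathbb{R}^q$; subscripts indicate the variable transformed. $\mathcal{S}(\mathbb{R}^d)$ is the Schwartz space, $\mathcal{S}_e$ its subspace of even functions. Assumption (A): $F:\mathbb{R}^d\times\mathbb{R}\to\mathbb{R}$ is continuous in $\mathbf{x}$ for each $k$ and in $k$ for each $\mathbf{x}$, and $\int\int|F(\mathbf{x},k)h(\mathbf{x})|dk\,d\mathbf{x}<\infty$ for all $h\in\mathcal{S}(\mathbb{R}^d)$. $F$ is of class AHa if $F(\lambda\mathbf{x},\lambda k)=|\lambda|F(\mathbf{x},k)$ for $\lambda\ne0$ and $F(\mathbf{x},k)=F(\mathbf{x},-k)=F(-\mathbf{x},k)$. $T^F$ is the linear form on $\mathcal{S}_e$: $T^F(\varphi)=-\frac12\int_{\mathbb{R}^d}\mathcal{F}^{-1}\varphi(\mathbf{x})\big(\int_{\mathbb{R}}F(\mathbf{x},k)e^{-ik}dk\big)d\mathbf{x}$; for $F$ of class AHa it is the unique solution $T$ of the spanning problem (find $T$ on $\mathcal{S}_e$ such that $N(\varphi-\varphi(\mathbf0)):=T(\varphi)$ satisfies $\int\int F\theta_0=N(\mathbf{w}\mapsto\int\int(|\mathbf{w}\cdot\mathbf{x}|-|k|)^+\theta_0\,dk\,d\mathbf{x})$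 for all $\theta_0(\mathbf{x},k)=e^{-irk}h(\mathbf{x})$, $r\ne0$, $h\in\mathcal{S}(\mathbb{R}^d)$). Radon transform: for $g\in L^1(\mathbb{R}^d)$, $\mathcal{R}g(\mathbf{0},k)=0$ and for $\mathbf{x}\ne\mathbf0$, $\mathcal{R}g(\mathbf{x},k)=\frac{1}{|x_j|}\int_{\mathbb{R}^{d-1}}g\big(y_1,\dots,y_{j-1},\frac{k-\sum_{i\ne j}x_iy_i}{x_j},y_{j+1},\dots,y_d\big)\prod_{i\neq j}dy_i$ for any $j$ with $x_j\ne0$ (independent of this choice). *)

theory Defs
  imports "HOL-Analysis.Analysis"
begin

text \<open>Euclidean space R^d is rendered as real^'n with d = CARD('n) (so d \<ge> 1 automatically).
  Schwartz functions are complex-valued.\<close>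

definition axis_pderiv :: "'n::finite \<Rightarrow> (real^'n \<Rightarrow> complex) \<Rightarrow> real^'n \<Rightarrow> complex" where
  "axis_pderiv i f x = vector_derivative (\<lambda>t. f (x + t *\<^sub>R axis i 1)) (at 0)"

fun iter_pderiv :: "'n::finite list \<Rightarrow> (real^'n \<Rightarrow> complex) \<Rightarrow> real^'n \<Rightarrow> complex" where
  "iter_pderiv [] f = f"
| "iter_pderiv (i # is) f = axis_pderiv i (iter_pderiv is f)"

definition schwartz :: "(real^'n::finite \<Rightarrow> complex) set" where
  "schwartz = {f. \<forall>is. continuous_on UNIV (iter_pderiv is f)
      \<and> (\<forall>i x. (\<lambda>t. iter_pderiv is f (x + t *\<^sub>R axis i 1)) differentiable (at 0))
      \<and> (\<forall>N::nat. bounded (range (\<lambda>x. (1 + norm x) ^ N *\<^sub>R iter_pderiv is f x)))}"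

definition schwartz_even :: "(real^'n::finite \<Rightarrow> complex) set" where
  "schwartz_even = {f \<in> schwartz. \<forall>x. f (- x) = f x}"

definition fourier1 :: "(real \<Rightarrow> complex) \<Rightarrow> real \<Rightarrow> complex" where
  "fourier1 g z = (\<integral>s. g s * exp (- \<i> * complex_of_real (z * s)) \<partial>lborel)"

definition fourier_inv :: "(real^'n::finite \<Rightarrow> complex) \<Rightarrow> real^'n \<Rightarrow> complex" where
  "fourier_inv G s = complex_of_real (inverse ((2 * pi) ^ CARD('n)))
      * (\<integral>z. G z * exp (\<i> * complex_of_real (s \<bullet> z)) \<partial>lborel)"

definition assumptionA :: "(real^'n::finite \<Rightarrow> real \<Rightarrow> real) \<Rightarrow> bool" where
  "assumptionA F \<longleftrightarrow> (\<forall>k. continuous_on UNIV (\<lambda>x. F x k))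
     \<and> (\<forall>x. continuous_on UNIV (F x))
     \<and> (\<forall>h\<in>schwartz. (\<integral>\<^sup>+ x. (\<integral>\<^sup>+ k. ennreal (norm (complex_of_real (F x k) * h x)) \<partial>lborel) \<partial>lborel) < \<infinity>)"

definition classAHa :: "(real^'n::finite \<Rightarrow> real \<Rightarrow> real) \<Rightarrow> bool" where
  "classAHa F \<longleftrightarrow> (\<forall>c x k. c \<noteq> 0 \<longrightarrow> F (c *\<^sub>R x) (c * k) = \<bar>c\<bar> * F x k)
     \<and> (\<forall>x k. F x k = F x (- k) \<and> F x k = F (- x) k)"

definition T_F :: "(real^'n::finite \<Rightarrow> real \<Rightarrow> real) \<Rightarrow> (real^'n \<Rightarrow> complex) \<Rightarrow> complex" where
  "T_F F \<phi> = - (1/2) * (\<integral>x. fourier_inv \<phi> x * fourier1 (\<lambda>k. complex_of_real (F x k)) 1 \<partial>lborel)"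

text \<open>Radon transform; the integral over R^(d-1) is over the coordinates i \<noteq> j.\<close>
definition radon :: "(real^'n::finite \<Rightarrow> complex) \<Rightarrow> real^'n \<Rightarrow> real \<Rightarrow> complex" where
  "radon g x k = (if x = 0 then 0 else
     (let j = (SOME j. x $ j \<noteq> 0) in
       complex_of_real (1 / \<bar>x $ j\<bar>) *
       (\<integral>u. g (\<chi> i. if i = j then (k - (\<Sum>l\<in>UNIV - {j}. x $ l * u l)) / x $ j else u i)
          \<partial>(\<Pi>\<^sub>M i\<in>UNIV - {j}. lborel))))"

definition Cn :: "nat \<Rightarrow> (real \<Rightarrow> real) \<Rightarrow> bool" where
  "Cn n g \<longleftrightarrow> (\<forall>j<n. \<forall>k. ((deriv ^^ j) g has_real_derivative (deriv ^^ Suc j) g k) (at k))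
      \<and> continuous_on UNIV ((deriv ^^ n) g)"

end

theory Submission
  imports Defs "HOL-Probability.Probability"
begin

lemma integrable_small_tail:
  fixes P :: "real \<Rightarrow> complex"
  assumes int: "integrable lborel P" and e: "e > 0"
  shows "\<exists>b\<ge>B. norm (P b) < e"
proof (rule ccontr)
  assume "\<not> ?thesis"
  hence ge: "\<And>b. b \<ge> B \<Longrightarrow> norm (P b) \<ge> e" by force
  have "\<And>n::nat. e * real n \<le> (\<integral>x. norm (P x) \<partial>lborel)"
  proof -
    fix n :: nat
    have "e * real n = (\<integral>x. indicator {B..B + real n} x * e \<partial>lborel)"
      by simp
    also have "\<dots> \<le> (\<integral>x. norm (P x) \<partial>lborel)"
      apply (rule integral_mono)
        apply (simp add: integrable_real_mult_indicator)
       apply (simp add: int)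
      using ge e by (auto simp: indicator_def)
    finally show "e * real n \<le> (\<integral>x. norm (P x) \<partial>lborel)" .
  qed
  moreover obtain n :: nat where "(\<integral>x. norm (P x) \<partial>lborel) / e < real n"
    using reals_Archimedean2 by blast
  ultimately show False using e
    by (metis mult.commute not_less pos_divide_less_eq)
qed

lemma integrable_small_tail_neg:
  fixes P :: "real \<Rightarrow> complex"
  assumes int: "integrable lborel P" and e: "e > 0"
  shows "\<exists>a\<le>B. norm (P a) < e"
proof -
  have "integrable lborel (\<lambda>x. P (-x))"
    using lborel_integrable_real_affine[OF int, of "-1" 0] by simp
  from integrable_small_tail[OF this e, of "-B"] obtain b where "b \<ge> -B" "norm (P (-b)) < e" by auto
  thus ?thesis by (intro exI[of _ "-b"]) auto
qed

lemma integral_deriv_zero: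
  fixes P q :: "real \<Rightarrow> complex"
  assumes der: "\<And>x. (P has_vector_derivative q x) (at x)"
    and intP: "integrable lborel P" and intq: "integrable lborel q"
  shows "integral\<^sup>L lborel q = 0"
proof -
  have "\<forall>n::nat. \<exists>b. b \<ge> real n \<and> norm (P b) < 1 / (real n + 1)"
    using integrable_small_tail[OF intP] by simp
  then obtain b where b: "\<And>n. b n \<ge> real n" "\<And>n. norm (P (b n)) < 1 / (real n + 1)"
    by metis
  have "\<forall>n::nat. \<exists>a. a \<le> - real n \<and> norm (P a) < 1 / (real n + 1)"
    using integrable_small_tail_neg[OF intP] by simp
  then obtain a where a: "\<And>n. a n \<le> - real n" "\<And>n. norm (P (a n)) < 1 / (real n + 1)"
    by metis
  have ab: "a n \<le> b n" for n using a(1)[of n] b(1)[of n] by simp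
  have meas[measurable]: "q \<in> borel_measurable borel" using intq by auto
  have eq: "(\<integral>x. indicator {a n..b n} x *\<^sub>R q x \<partial>lborel) = P (b n) - P (a n)" for n
  proof -
    have "(q has_integral P (b n) - P (a n)) {a n..b n}"
      by (rule fundamental_theorem_of_calculus[OF ab])
         (auto intro: has_vector_derivative_at_within der)
    moreover have "set_integrable lborel {a n..b n} q"
      by (simp add: intq set_integrable_def integrable_mult_indicator)
    ultimately show ?thesis
      using set_borel_integral_eq_integral(2)
      by (metis integral_unique set_lebesgue_integral_def)
  qed
  have lim1: "(\<lambda>n. \<integral>x. indicator {a n..b n} x *\<^sub>R q x \<partial>lborel) \<longlonglongrightarrow> integral\<^sup>L lborel q"
  proof (rule integral_dominated_convergence[where w="\<lambda>x. norm (q x)"])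
    show "integrable lborel (\<lambda>x. norm (q x))" using intq by auto
    show "AE x in lborel. (\<lambda>n. indicator {a n..b n} x *\<^sub>R q x) \<longlonglongrightarrow> q x"
    proof (rule AE_I2)
      fix x
      obtain N :: nat where N: "real N \<ge> \<bar>x\<bar>" using real_arch_simple by blast
      have "\<forall>n\<ge>N. indicator {a n..b n} x *\<^sub>R q x = q x"
      proof safe
        fix n assume "n \<ge> N"
        hence "real n \<ge> real N" by simp
        hence "real n \<ge> \<bar>x\<bar>" using N by linarith
        hence "x \<in> {a n..b n}" using a(1)[of n] b(1)[of n] by auto
        thus "indicator {a n..b n} x *\<^sub>R q x = q x" by simp
      qed
      thus "(\<lambda>n. indicator {a n..b n} x *\<^sub>R q x) \<longlonglongrightarrow> q x"
        by (intro tendsto_eventually) (auto simp: eventually_sequentially)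
    qed
  qed (auto simp: indicator_def)
  have lim2: "(\<lambda>n. P (b n) - P (a n)) \<longlonglongrightarrow> 0"
  proof -
    have z: "(\<lambda>n. 1 / (real n + 1)) \<longlonglongrightarrow> 0"
      using LIMSEQ_inverse_real_of_nat by (simp add: inverse_eq_divide add.commute)
    have "(\<lambda>n. P (b n)) \<longlonglongrightarrow> 0"
      by (rule Lim_null_comparison[OF _ z]) (use b(2) less_imp_le in \<open>auto intro!: always_eventually\<close>)
    moreover have "(\<lambda>n. P (a n)) \<longlonglongrightarrow> 0"
      by (rule Lim_null_comparison[OF _ z]) (use a(2) less_imp_le in \<open>auto intro!: always_eventually\<close>)
    ultimately show ?thesis using tendsto_diff by fastforce
  qed
  show ?thesis using lim1 lim2 eq LIMSEQ_unique by auto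
qed

lemma fourier1_deriv:
  fixes h h' :: "real \<Rightarrow> real"
  assumes der: "\<And>k. (h has_real_derivative h' k) (at k)"
    and inth: "integrable lborel h" and inth': "integrable lborel h'"
  shows "fourier1 (\<lambda>k. complex_of_real (h' k)) 1 = \<i> * fourier1 (\<lambda>k. complex_of_real (h k)) 1"
proof -
  let ?E = "\<lambda>s. exp (- \<i> * complex_of_real s)"
  have mh[measurable]: "h \<in> borel_measurable borel" using inth by auto
  have mh'[measurable]: "h' \<in> borel_measurable borel" using inth' by auto
  have nE: "norm (?E s) = 1" for s by (simp add: norm_exp_eq_Re)
  have i1: "integrable lborel (\<lambda>s. complex_of_real (h s) * ?E s)"
    by (rule Bochner_Integration.integrable_bound[where f="\<lambda>s. complex_of_real (h s)"])
       (auto simp: inth norm_mult nE)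
  have i2: "integrable lborel (\<lambda>s. complex_of_real (h' s) * ?E s)"
    by (rule Bochner_Integration.integrable_bound[where f="\<lambda>s. complex_of_real (h' s)"])
       (auto simp: inth' norm_mult nE)
  have "((\<lambda>s. complex_of_real (h s) * ?E s) has_vector_derivative
        (complex_of_real (h' k) * ?E k - \<i> * (complex_of_real (h k) * ?E k))) (at k)" for k
  proof -
    have d1: "((\<lambda>s. complex_of_real (h s)) has_vector_derivative complex_of_real (h' k)) (at k)"
      using der[of k] by (simp add: has_real_derivative_iff_has_vector_derivative[symmetric] has_vector_derivative_of_real)
    have d2: "(?E has_vector_derivative (- \<i> * ?E k)) (at k)"
    proof -
      have "((iexp \<circ> uminus) has_vector_derivative ((-1) *\<^sub>R (\<i> * iexp (- k)))) (at k)"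
        by (rule vector_diff_chain_within) (auto intro!: derivative_eq_intros has_vector_derivative_iexp)
      moreover have "(iexp \<circ> uminus) = ?E" by (auto simp: fun_eq_iff)
      ultimately show ?thesis by simp
    qed
    show ?thesis using has_vector_derivative_mult[OF d1 d2] by (simp add: algebra_simps)
  qed
  from integral_deriv_zero[OF this i1] have
    "(\<integral>s. complex_of_real (h' s) * ?E s - \<i> * (complex_of_real (h s) * ?E s) \<partial>lborel) = 0"
    using i1 i2 by auto
  hence "(\<integral>s. complex_of_real (h' s) * ?E s \<partial>lborel) = \<i> * (\<integral>s. complex_of_real (h s) * ?E s \<partial>lborel)"
    using i1 i2 by (simp add: integral_diff)
  thus ?thesis unfolding fourier1_def by simp
qed


lemma fourier1_iter_deriv:
  fixes g :: "real \<Rightarrow> real"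
  assumes C: "Cn n g" and I: "\<And>j. j \<le> n \<Longrightarrow> integrable lborel ((deriv ^^ j) g)"
  shows "j \<le> n \<Longrightarrow> fourier1 (\<lambda>k. complex_of_real ((deriv ^^ j) g k)) 1 = \<i> ^ j * fourier1 (\<lambda>k. complex_of_real (g k)) 1"
proof (induction j)
  case 0 then show ?case by simp
next
  case (Suc j)
  have "j < n" using Suc by simp
  hence der: "\<And>k. ((deriv ^^ j) g has_real_derivative (deriv ^^ Suc j) g k) (at k)"
    using C unfolding Cn_def by blast
  have "fourier1 (\<lambda>k. complex_of_real ((deriv ^^ Suc j) g k)) 1
      = \<i> * fourier1 (\<lambda>k. complex_of_real ((deriv ^^ j) g k)) 1"
  proof (rule fourier1_deriv[OF der])
    show "integrable lborel ((deriv ^^ j) g)" using I \<open>j < n\<close> by simp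
    show "integrable lborel ((deriv ^^ Suc j) g)" using I Suc(2) by blast
  qed
  also have "\<dots> = \<i> ^ Suc j * fourier1 (\<lambda>k. complex_of_real (g k)) 1"
    using Suc by simp
  finally show ?case .
qed

lemma fourier1_cmult: "fourier1 (\<lambda>k. c * h k) z = c * fourier1 h z"
  unfolding fourier1_def by (simp add: mult.assoc)

lemma part_ii_pointwise:
  fixes g :: "real \<Rightarrow> real"
  assumes C: "Cn n g" and I: "\<And>j. j \<le> n \<Longrightarrow> integrable lborel ((deriv ^^ j) g)"
  shows "fourier1 (\<lambda>k. (- \<i>) ^ n * complex_of_real ((deriv ^^ n) g k)) 1 = fourier1 (\<lambda>k. complex_of_real (g k)) 1"
proof -
  have "fourier1 (\<lambda>k. (- \<i>) ^ n * complex_of_real ((deriv ^^ n) g k)) 1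
     = (- \<i>) ^ n * (\<i> ^ n * fourier1 (\<lambda>k. complex_of_real (g k)) 1)"
    by (simp add: fourier1_cmult fourier1_iter_deriv[OF C I])
  also have "(- \<i>) ^ n * \<i> ^ n = (1::complex)"
    by (simp add: power_mult_distrib[symmetric])
  ultimately show ?thesis by (simp add: mult.assoc[symmetric])
qed


lemma integrable_inv_sq: "integrable lborel (\<lambda>x::real. inverse (1 + x^2))"
  using integrable_inverse_1_plus_square by (simp add: set_integrable_def)

definition wprod :: "'a::euclidean_space \<Rightarrow> real" where
  "wprod x = (\<Prod>b\<in>Basis. inverse (1 + (x \<bullet> b)^2))"

lemma integrable_PiM_inv_sq:
  assumes "finite I"
  shows "integrable (PiM I (\<lambda>_. lborel)) (\<lambda>x. \<Prod>i\<in>I. inverse (1 + (x i)^2) :: real)"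
proof -
  interpret product_sigma_finite "\<lambda>_::'i. lborel :: real measure" by standard
  have "integrable lborel (\<lambda>x::real. inverse (1 + x^2))"
    using integrable_inverse_1_plus_square by (simp add: set_integrable_def)
  thus ?thesis
    using product_integrable_prod[OF assms, of "\<lambda>_ t. inverse (1 + t^2)"] by simp
qed

lemma integrable_wprod: "integrable lborel (wprod :: 'a::euclidean_space \<Rightarrow> real)"
proof -
  have "integrable (\<Pi>\<^sub>M b\<in>Basis. lborel) (\<lambda>f. \<Prod>b\<in>(Basis::'a set). inverse (1 + (f b)^2) :: real)"
    by (rule integrable_PiM_inv_sq) simp
  moreover have "(\<lambda>f. wprod (\<Sum>b\<in>(Basis::'a set). f b *\<^sub>R b)) = (\<lambda>f. \<Prod>b\<in>(Basis::'a set). inverse (1 + (f b)^2) :: real)"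
    unfolding wprod_def
    by (intro ext prod.cong refl) (simp add: inner_sum_left inner_Basis if_distrib sum.delta cong: if_cong)
  ultimately have "integrable (\<Pi>\<^sub>M b\<in>Basis. lborel) (\<lambda>f. wprod (\<Sum>b\<in>(Basis::'a set). f b *\<^sub>R b))"
    by simp
  hence "integrable (distr (\<Pi>\<^sub>M b\<in>Basis. lborel) borel (\<lambda>f. \<Sum>b\<in>(Basis::'a set). f b *\<^sub>R b)) wprod"
  proof (subst integrable_distr_eq)
    show "wprod \<in> borel_measurable borel" unfolding wprod_def by measurable
  qed auto
  thus ?thesis by (simp add: lborel_eq[symmetric])
qed

lemma wprod_bound:
  fixes x :: "'a::euclidean_space"
  shows "(\<Prod>b\<in>Basis. (1 + (x \<bullet> b)^2)) \<le> (1 + norm x) ^ (2 * DIM('a))"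
proof -
  have "(\<Prod>b\<in>Basis. (1 + (x \<bullet> b)^2)) \<le> (\<Prod>b\<in>(Basis::'a set). (1 + norm x)^2)"
  proof (rule prod_mono)
    fix b :: 'a assume b: "b \<in> Basis"
    have "\<bar>x \<bullet> b\<bar> \<le> norm x" using Basis_le_norm[OF b] .
    hence "(x \<bullet> b)^2 \<le> (norm x)^2"
      by (metis abs_le_square_iff abs_norm_cancel)
    moreover have "(1 + norm x)^2 = 1 + 2 * norm x + (norm x)^2" by (simp add: power2_eq_square algebra_simps)
    ultimately show "0 \<le> 1 + (x \<bullet> b)^2 \<and> 1 + (x \<bullet> b)^2 \<le> (1 + norm x)^2"
      using norm_ge_zero[of x] by (smt (verit) zero_le_power2)
  qed
  also have "\<dots> = (1 + norm x) ^ (2 * DIM('a))"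
    by (simp add: power_mult)
  finally show ?thesis .
qed

lemma integrable_poly_decay:
  fixes \<phi> :: "'a::euclidean_space \<Rightarrow> 'b::{banach,second_countable_topology}"
  assumes m: "\<phi> \<in> borel_measurable borel"
    and C: "\<And>x. (1 + norm x) ^ (2 * DIM('a)) * norm (\<phi> x) \<le> C"
  shows "integrable lborel \<phi>"
proof (rule Bochner_Integration.integrable_bound[where f="\<lambda>x. C * wprod x"])
  show "integrable lborel (\<lambda>x. C * wprod x)" by (intro integrable_mult_right integrable_wprod)
  show "\<phi> \<in> borel_measurable lborel" using m by simp
  show "AE x in lborel. norm (\<phi> x) \<le> norm (C * wprod x)"
  proof (rule AE_I2)
    fix x :: 'a
    let ?P = "(\<Prod>b\<in>(Basis::'a set). (1 + (x \<bullet> b)^2))"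
    have P0: "?P > 0" by (intro prod_pos) (simp add: add_pos_nonneg)
    have w: "wprod x = inverse ?P" unfolding wprod_def using prod_inversef[of "\<lambda>b. 1 + (x \<bullet> b)^2" Basis] by (simp add: o_def)
    have "?P * norm (\<phi> x) \<le> (1 + norm x) ^ (2 * DIM('a)) * norm (\<phi> x)"
      by (rule mult_right_mono[OF wprod_bound]) simp
    also have "\<dots> \<le> C" by (rule C)
    finally have "norm (\<phi> x) \<le> C * inverse ?P" using P0
      by (simp add: field_simps)
    moreover have "C \<ge> 0" using C[of x] by (smt (verit) norm_ge_zero zero_le_mult_iff zero_le_power add_nonneg_nonneg zero_le_one)
    ultimately show "norm (\<phi> x) \<le> norm (C * wprod x)" using w P0 by simp
  qed
qed

lemma schwartz_integrable:
  assumes "\<phi> \<in> schwartz"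
  shows "integrable lborel (\<phi> :: real^'n::finite \<Rightarrow> complex)"
proof -
  have c: "continuous_on UNIV \<phi>" and b: "\<And>N. bounded (range (\<lambda>x. (1 + norm x) ^ N *\<^sub>R \<phi> x))"
    using assms unfolding schwartz_def by (auto dest: spec[of _ "[]"])
  obtain C where C: "\<And>x. norm ((1 + norm x) ^ (2 * DIM(real^'n)) *\<^sub>R \<phi> x) \<le> C"
    using b[of "2 * DIM(real^'n)"] unfolding bounded_iff by blast
  show ?thesis
  proof (rule integrable_poly_decay)
    show "\<phi> \<in> borel_measurable borel" using c by (rule borel_measurable_continuous_onI)
    fix x :: "real^'n"
    show "(1 + norm x) ^ (2 * DIM(real^'n)) * norm (\<phi> x) \<le> C"
      using C[of x] by simp
  qed
qed


lemma pl: "pair_sigma_finite (lborel::'a::euclidean_space measure) (lborel::'b::euclidean_space measure)"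
  by (simp add: pair_sigma_finite_def sigma_finite_lborel)

lemma fubini_sep:
  fixes f :: "'a::euclidean_space \<Rightarrow> complex" and g :: "'b::euclidean_space \<Rightarrow> complex"
    and e :: "'a \<Rightarrow> 'b \<Rightarrow> complex"
  assumes f: "integrable lborel f" and g: "integrable lborel g"
    and em: "(\<lambda>(x,y). e x y) \<in> borel_measurable (lborel \<Otimes>\<^sub>M lborel)"
    and en: "\<And>x y. norm (e x y) = 1"
  shows "integrable (lborel \<Otimes>\<^sub>M lborel) (\<lambda>(x,y). f x * g y * e x y)"
    and "(\<integral>x. (\<integral>y. f x * g y * e x y \<partial>lborel) \<partial>lborel) = (\<integral>y. (\<integral>x. f x * g y * e x y \<partial>lborel) \<partial>lborel)"
proof -
  have fm[measurable]: "f \<in> borel_measurable borel" using f by auto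
  have gm[measurable]: "g \<in> borel_measurable borel" using g by auto
  have m: "(\<lambda>(x,y). f x * g y * e x y) \<in> borel_measurable (lborel \<Otimes>\<^sub>M lborel)"
  proof -
    have "(\<lambda>p. f (fst p) * g (snd p) * (\<lambda>(x,y). e x y) p) \<in> borel_measurable (lborel \<Otimes>\<^sub>M lborel)"
      using em by measurable
    thus ?thesis by (simp add: case_prod_beta')
  qed
  show int: "integrable (lborel \<Otimes>\<^sub>M lborel) (\<lambda>(x,y). f x * g y * e x y)"
  proof (rule pair_sigma_finite.Fubini_integrable[OF pl m])
    have "(\<lambda>x. \<integral>y. norm (case (x, y) of (x, y) \<Rightarrow> f x * g y * e x y) \<partial>lborel)
        = (\<lambda>x. norm (f x) * (\<integral>y. norm (g y) \<partial>lborel))"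
      by (simp add: norm_mult en)
    thus "integrable lborel (\<lambda>x. \<integral>y. norm (case (x, y) of (x, y) \<Rightarrow> f x * g y * e x y) \<partial>lborel)"
      using f by simp
    show "AE x in lborel. integrable lborel (\<lambda>y. case (x, y) of (x, y) \<Rightarrow> f x * g y * e x y)"
    proof (rule AE_I2)
      fix x
      have "(\<lambda>y. (\<lambda>(x,y). e x y) (x, y)) \<in> borel_measurable lborel"
        using measurable_Pair2[OF em] by simp
      hence [measurable]: "(\<lambda>y. e x y) \<in> borel_measurable lborel" by simp
      show "integrable lborel (\<lambda>y. case (x, y) of (x, y) \<Rightarrow> f x * g y * e x y)"
        by (rule Bochner_Integration.integrable_bound[where f="\<lambda>y. norm (f x) * norm (g y)"])
           (auto simp: g norm_mult en)
    qed
  qed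
  show "(\<integral>x. (\<integral>y. f x * g y * e x y \<partial>lborel) \<partial>lborel) = (\<integral>y. (\<integral>x. f x * g y * e x y \<partial>lborel) \<partial>lborel)"
    using pair_sigma_finite.Fubini_integral[OF pl int] by simp
qed

lemma part_i:
  fixes G \<phi> :: "real^'n::finite \<Rightarrow> complex"
  assumes G: "integrable lborel G" and \<phi>: "\<phi> \<in> schwartz"
  shows "- (1/2) * (\<integral>x. fourier_inv \<phi> x * G x \<partial>lborel) = (\<integral>w. \<phi> w * (- (1/2) * fourier_inv G w) \<partial>lborel)"
proof -
  let ?c = "complex_of_real (inverse ((2 * pi) ^ CARD('n)))"
  let ?e = "\<lambda>(x::real^'n) (z::real^'n). exp (\<i> * complex_of_real (x \<bullet> z))"
  have \<phi>i: "integrable lborel \<phi>" using schwartz_integrable[OF \<phi>] .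
  have em: "(\<lambda>(x,y). ?e x y) \<in> borel_measurable (lborel \<Otimes>\<^sub>M lborel)" by measurable
  have en: "\<And>x y. norm (?e x y) = 1" by (simp add: norm_exp_eq_Re)
  note F = fubini_sep(2)[OF G \<phi>i em en]
  have i1: "\<And>x. (\<integral>z. G x * \<phi> z * ?e x z \<partial>lborel) = G x * (\<integral>z. \<phi> z * ?e x z \<partial>lborel)"
    by (simp only: mult.assoc integral_mult_right_zero)
  have i2: "\<And>w. (\<integral>x. G x * \<phi> w * ?e x w \<partial>lborel) = \<phi> w * (\<integral>x. G x * ?e w x \<partial>lborel)"
  proof -
    fix w
    have "(\<integral>x. G x * \<phi> w * ?e x w \<partial>lborel) = (\<integral>x. \<phi> w * (G x * ?e w x) \<partial>lborel)"
      by (simp add: inner_commute mult_ac)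
    thus "?thesis w" by (simp only: integral_mult_right_zero)
  qed
  have L: "(\<integral>x. fourier_inv \<phi> x * G x \<partial>lborel) = ?c * (\<integral>x. (\<integral>z. G x * \<phi> z * ?e x z \<partial>lborel) \<partial>lborel)"
  proof -
    have "(\<integral>x. fourier_inv \<phi> x * G x \<partial>lborel) = (\<integral>x. ?c * (G x * (\<integral>z. \<phi> z * ?e x z \<partial>lborel)) \<partial>lborel)"
      unfolding fourier_inv_def by (simp only: mult_ac)
    also have "\<dots> = ?c * (\<integral>x. G x * (\<integral>z. \<phi> z * ?e x z \<partial>lborel) \<partial>lborel)"
      by (simp only: integral_mult_right_zero)
    finally show ?thesis by (simp only: i1)
  qed
  have R: "(\<integral>w. \<phi> w * (- (1/2) * fourier_inv G w) \<partial>lborel) = - (1/2) * ?c * (\<integral>w. (\<integral>x. G x * \<phi> w * ?e x w \<partial>lborel) \<partial>lborel)"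
  proof -
    have "(\<integral>w. \<phi> w * (- (1/2) * fourier_inv G w) \<partial>lborel) = (\<integral>w. (- (1/2) * ?c) * (\<phi> w * (\<integral>x. G x * ?e w x \<partial>lborel)) \<partial>lborel)"
      unfolding fourier_inv_def by (simp only: mult_ac)
    also have "\<dots> = - (1/2) * ?c * (\<integral>w. \<phi> w * (\<integral>x. G x * ?e w x \<partial>lborel) \<partial>lborel)"
      by (simp only: integral_mult_right_zero)
    finally show ?thesis by (simp only: i2)
  qed
  show ?thesis using L R F by simp
qed


lemma normal_density_scale:
  assumes s: "\<sigma> > 0"
  shows "normal_density 0 \<sigma> (\<sigma> * x) = std_normal_density x / \<sigma>"
proof -
  have "sqrt (2 * pi * \<sigma>\<^sup>2) = \<sigma> * sqrt (2 * pi)"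
    using s by (simp add: real_sqrt_mult mult.commute)
  moreover have "(\<sigma> * x)\<^sup>2 / (2 * \<sigma>\<^sup>2) = x\<^sup>2 / 2"
    using s by (simp add: power_mult_distrib)
  ultimately show ?thesis
    unfolding normal_density_def using s by (simp add: field_simps)
qed

lemma gauss_ft1:
  assumes s: "\<sigma> > 0"
  shows "(\<integral>x. complex_of_real (normal_density 0 \<sigma> x) * exp (\<i> * complex_of_real (x * \<xi>)) \<partial>lborel)
        = complex_of_real (exp (- (\<sigma> * \<xi>)\<^sup>2 / 2))"
proof -
  have "char std_normal_distribution (\<sigma> * \<xi>) = complex_of_real (exp (- (\<sigma> * \<xi>)\<^sup>2 / 2))"
    by (simp add: char_std_normal_distribution)
  moreover have "char std_normal_distribution (\<sigma> * \<xi>)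
     = (\<integral>x. std_normal_density x *\<^sub>R iexp (\<sigma> * \<xi> * x) \<partial>lborel)"
    unfolding char_def by (subst integral_density) auto
  moreover have "(\<integral>x. complex_of_real (normal_density 0 \<sigma> x) * exp (\<i> * complex_of_real (x * \<xi>)) \<partial>lborel)
     = \<bar>\<sigma>\<bar> *\<^sub>R (\<integral>x. complex_of_real (normal_density 0 \<sigma> (0 + \<sigma> * x)) * exp (\<i> * complex_of_real ((0 + \<sigma> * x) * \<xi>)) \<partial>lborel)"
    by (rule lborel_integral_real_affine) (use s in simp)
  moreover have "\<bar>\<sigma>\<bar> *\<^sub>R (\<integral>x. complex_of_real (normal_density 0 \<sigma> (0 + \<sigma> * x)) * exp (\<i> * complex_of_real ((0 + \<sigma> * x) * \<xi>)) \<partial>lborel)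
     = (\<integral>x. std_normal_density x *\<^sub>R iexp (\<sigma> * \<xi> * x) \<partial>lborel)"
  proof -
    have "\<And>x. \<sigma> *\<^sub>R (complex_of_real (normal_density 0 \<sigma> (\<sigma> * x)) * exp (\<i> * complex_of_real (\<sigma> * x * \<xi>)))
        = std_normal_density x *\<^sub>R iexp (\<sigma> * \<xi> * x)"
    proof -
      fix x
      have "\<sigma> * normal_density 0 \<sigma> (\<sigma> * x) = std_normal_density x"
        using s by (simp add: normal_density_scale)
      hence "complex_of_real \<sigma> * complex_of_real (normal_density 0 \<sigma> (\<sigma> * x)) = complex_of_real (std_normal_density x)"
        by (metis of_real_mult)
      thus "?thesis x" by (simp add: scaleR_conv_of_real mult_ac)
    qed
    thus ?thesis using s by (simp del: of_real_mult add: integral_scaleR_right[symmetric])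
  qed
  ultimately show ?thesis by simp
qed

lemma sum_basis_inner: "b \<in> Basis \<Longrightarrow> (\<Sum>c\<in>Basis. f c *\<^sub>R c) \<bullet> (b::'a::euclidean_space) = f b"
  by (simp add: inner_sum_left inner_Basis if_distrib sum.delta cong: if_cong)

lemma lborel_basis_prod:
  fixes f :: "'a::euclidean_space \<Rightarrow> real \<Rightarrow> 'c::{real_normed_field,banach,second_countable_topology}"
  assumes int: "\<And>b. b \<in> Basis \<Longrightarrow> integrable lborel (f b)"
  shows "integrable lborel (\<lambda>v::'a. \<Prod>b\<in>Basis. f b (v \<bullet> b))"
    and "(\<integral>v. (\<Prod>b\<in>Basis. f b (v \<bullet> b)) \<partial>(lborel::'a measure)) = (\<Prod>b\<in>Basis. \<integral>t. f b t \<partial>lborel)"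
proof -
  interpret product_sigma_finite "\<lambda>_::'a. lborel :: real measure" by standard
  have m[measurable]: "\<And>b. b \<in> Basis \<Longrightarrow> f b \<in> borel_measurable borel"
    using int by auto
  have mp: "(\<lambda>v::'a. \<Prod>b\<in>Basis. f b (v \<bullet> b)) \<in> borel_measurable borel"
    by (rule borel_measurable_prod) auto
  have eq: "(\<lambda>x. (\<lambda>v::'a. \<Prod>b\<in>Basis. f b (v \<bullet> b)) (\<Sum>c\<in>Basis. x c *\<^sub>R c)) = (\<lambda>x. \<Prod>b\<in>Basis. f b (x b))"
    by (intro ext prod.cong refl) (simp add: sum_basis_inner)
  have T: "(\<lambda>x. \<Sum>c\<in>(Basis::'a set). x c *\<^sub>R c) \<in> measurable (\<Pi>\<^sub>M b\<in>Basis. lborel) borel"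
    by measurable
  have ip: "integrable (\<Pi>\<^sub>M b\<in>Basis. lborel) (\<lambda>x. \<Prod>b\<in>(Basis::'a set). f b (x b))"
    by (rule product_integrable_prod) (auto intro: int)
  show "integrable lborel (\<lambda>v::'a. \<Prod>b\<in>Basis. f b (v \<bullet> b))"
    apply (subst lborel_eq)
    apply (subst integrable_distr_eq[OF T mp])
    using ip eq by simp
  show "(\<integral>v. (\<Prod>b\<in>Basis. f b (v \<bullet> b)) \<partial>(lborel::'a measure)) = (\<Prod>b\<in>Basis. \<integral>t. f b t \<partial>lborel)"
    apply (subst lborel_eq)
    apply (subst integral_distr[OF T mp])
    using product_integral_prod[of Basis f] int eq by simp
qed

definition Kd :: "real \<Rightarrow> 'a::euclidean_space \<Rightarrow> real" where
  "Kd \<sigma> v = (\<Prod>b\<in>Basis. normal_density 0 \<sigma> (v \<bullet> b))"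

definition Qd :: "'a::euclidean_space \<Rightarrow> real" where
  "Qd v = (\<Sum>b\<in>Basis. (v \<bullet> b)\<^sup>2)"

lemma gauss_ft:
  assumes s: "\<sigma> > 0"
  shows "integrable lborel (\<lambda>v::'a::euclidean_space. complex_of_real (Kd \<sigma> v) * exp (\<i> * complex_of_real (v \<bullet> u)))"
    and "(\<integral>v. complex_of_real (Kd \<sigma> v) * exp (\<i> * complex_of_real (v \<bullet> u)) \<partial>(lborel::'a measure))
        = complex_of_real (exp (- \<sigma>\<^sup>2 * Qd u / 2))"
proof -
  let ?f = "\<lambda>b t. complex_of_real (normal_density 0 \<sigma> t) * exp (\<i> * complex_of_real (t * (u \<bullet> b)))"
  have int: "integrable lborel (?f b)" for b
    by (rule Bochner_Integration.integrable_bound[where f="normal_density 0 \<sigma>"])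
       (auto simp: norm_mult norm_exp_eq_Re integrable_normal_density[OF s])
  have eq: "complex_of_real (Kd \<sigma> v) * exp (\<i> * complex_of_real (v \<bullet> u)) = (\<Prod>b\<in>Basis. ?f b (v \<bullet> b))" for v :: 'a
  proof -
    have "v \<bullet> u = (\<Sum>b\<in>Basis. (v \<bullet> b) * (u \<bullet> b))" by (rule euclidean_inner)
    hence "exp (\<i> * complex_of_real (v \<bullet> u)) = (\<Prod>b\<in>Basis. exp (\<i> * complex_of_real ((v \<bullet> b) * (u \<bullet> b))))"
      by (simp add: sum_distrib_left exp_sum[symmetric])
    thus ?thesis unfolding Kd_def by (simp add: prod.distrib)
  qed
  show "integrable lborel (\<lambda>v::'a::euclidean_space. complex_of_real (Kd \<sigma> v) * exp (\<i> * complex_of_real (v \<bullet> u)))"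
    unfolding eq using lborel_basis_prod(1)[of ?f] int by simp
  have "(\<integral>v. complex_of_real (Kd \<sigma> v) * exp (\<i> * complex_of_real (v \<bullet> u)) \<partial>(lborel::'a measure))
     = (\<Prod>b\<in>(Basis::'a set). \<integral>t. ?f b t \<partial>lborel)"
    unfolding eq using lborel_basis_prod(2)[of ?f] int by simp
  also have "\<dots> = (\<Prod>b\<in>(Basis::'a set). complex_of_real (exp (- (\<sigma> * (u \<bullet> b))\<^sup>2 / 2)))"
    using gauss_ft1[OF s] by simp
  also have "\<dots> = complex_of_real (exp (- \<sigma>\<^sup>2 * Qd u / 2))"
    unfolding Qd_def
    by (simp add: exp_sum[symmetric] sum_divide_distrib sum_distrib_left power_mult_distrib sum_negf
           flip: of_real_prod)
  finally show "(\<integral>v. complex_of_real (Kd \<sigma> v) * exp (\<i> * complex_of_real (v \<bullet> u)) \<partial>(lborel::'a measure))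
        = complex_of_real (exp (- \<sigma>\<^sup>2 * Qd u / 2))" .
qed


lemma ae_zero_boxes_real:
  fixes f :: "'a::euclidean_space \<Rightarrow> real"
  assumes f: "integrable lborel f"
    and z: "\<And>l u. (\<integral>x. indicator (box l u) x * f x \<partial>lborel) = 0"
  shows "AE x in lborel. f x = 0"
proof -
  have fm[measurable]: "f \<in> borel_measurable borel" using f by auto
  let ?fp = "\<lambda>x. ennreal (max 0 (f x))" and ?fm = "\<lambda>x. ennreal (max 0 (- f x))"
  have ip: "integrable lborel (\<lambda>x. max 0 (f x))" using f by auto
  have im: "integrable lborel (\<lambda>x. max 0 (- f x))" using f by auto
  have box_eq: "emeasure (density lborel ?fp) (box l u) = emeasure (density lborel ?fm) (box l u)" for l u :: 'a
  proof -
    have "emeasure (density lborel ?fp) (box l u) = (\<integral>\<^sup>+ x. ennreal (indicator (box l u) x * max 0 (f x)) \<partial>lborel)"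
      by (subst emeasure_density) (auto intro!: nn_integral_cong simp: indicator_def)
    also have "\<dots> = ennreal (\<integral>x. indicator (box l u) x * max 0 (f x) \<partial>lborel)"
      by (rule nn_integral_eq_integral) (use integrable_mult_indicator[OF _ ip, of "box l u"] in simp_all)
    finally have 1: "emeasure (density lborel ?fp) (box l u) = ennreal (\<integral>x. indicator (box l u) x * max 0 (f x) \<partial>lborel)" .
    have "emeasure (density lborel ?fm) (box l u) = (\<integral>\<^sup>+ x. ennreal (indicator (box l u) x * max 0 (- f x)) \<partial>lborel)"
      by (subst emeasure_density) (auto intro!: nn_integral_cong simp: indicator_def)
    also have "\<dots> = ennreal (\<integral>x. indicator (box l u) x * max 0 (- f x) \<partial>lborel)"
      by (rule nn_integral_eq_integral) (use integrable_mult_indicator[OF _ im, of "box l u"] in simp_all)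
    finally have 2: "emeasure (density lborel ?fm) (box l u) = ennreal (\<integral>x. indicator (box l u) x * max 0 (- f x) \<partial>lborel)" .
    have "(\<integral>x. indicator (box l u) x * f x \<partial>lborel)
        = (\<integral>x. indicator (box l u) x * max 0 (f x) - indicator (box l u) x * max 0 (- f x) \<partial>lborel)"
      by (rule Bochner_Integration.integral_cong) (auto simp: indicator_def)
    also have "\<dots> = (\<integral>x. indicator (box l u) x * max 0 (f x) \<partial>lborel) - (\<integral>x. indicator (box l u) x * max 0 (- f x) \<partial>lborel)"
      by (rule Bochner_Integration.integral_diff) (use integrable_mult_indicator[OF _ im, of "box l u"] integrable_mult_indicator[OF _ ip, of "box l u"] in simp_all)
    finally show ?thesis using 1 2 z[of l u] by simp
  qed
  have dens: "density lborel ?fp = density lborel ?fm"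
  proof (rule measure_eqI_generator_eq)
    let ?E = "range (\<lambda>(a, b). box a b::'a set)"
    show "Int_stable ?E"
      by (auto simp: Int_stable_def box_Int_box)
    show "?E \<subseteq> Pow UNIV" by simp
    show "sets (density lborel ?fp) = sigma_sets UNIV ?E" "sets (density lborel ?fm) = sigma_sets UNIV ?E"
      by (simp_all add: borel_eq_box)
    let ?A = "\<lambda>n::nat. box (- (real n *\<^sub>R One)) (real n *\<^sub>R One) :: 'a set"
    show "range ?A \<subseteq> ?E" "(\<Union>i. ?A i) = UNIV"
      unfolding UN_box_eq_UNIV by auto
    show "emeasure (density lborel ?fp) (?A i) \<noteq> \<infinity>" for i
    proof -
      have "emeasure (density lborel ?fp) (?A i) \<le> emeasure (density lborel ?fp) UNIV"
        by (rule emeasure_mono) auto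
      also have "\<dots> = (\<integral>\<^sup>+ x. ?fp x \<partial>lborel)"
        by (subst emeasure_density) auto
      also have "\<dots> < \<infinity>"
        using ip by (simp add: integrable_iff_bounded)
      finally show ?thesis by simp
    qed
    show "emeasure (density lborel ?fp) X = emeasure (density lborel ?fm) X" if "X \<in> ?E" for X
      using that box_eq by auto
  qed
  have "AE x in lborel. ?fp x = ?fm x"
    by (rule sigma_finite_measure.density_unique[OF sigma_finite_lborel _ _ dens]) auto
  thus ?thesis
    by eventually_elim (auto simp: max_def split: if_splits)
qed

lemma ae_zero_boxes:
  fixes f :: "'a::euclidean_space \<Rightarrow> complex"
  assumes f: "integrable lborel f"
    and z: "\<And>l u. (\<integral>x. indicator (box l u) x * f x \<partial>lborel) = 0"
  shows "AE x in lborel. f x = 0"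
proof -
  have "AE x in lborel. Re (f x) = 0"
  proof (rule ae_zero_boxes_real)
    fix l u :: 'a
    have ii: "integrable lborel (\<lambda>x. indicator (box l u) x * f x)"
    proof -
      have "(\<lambda>x. indicator (box l u) x * f x) = (\<lambda>x. indicator (box l u) x *\<^sub>R f x)"
        by (auto simp: fun_eq_iff indicator_def)
      thus ?thesis using integrable_mult_indicator[OF _ f, of "box l u"] by simp
    qed
    have "(\<integral>x. indicator (box l u) x * Re (f x) \<partial>lborel) = (\<integral>x. Re (indicator (box l u) x * f x) \<partial>lborel)"
      by (rule Bochner_Integration.integral_cong) (auto simp: indicator_def)
    also have "\<dots> = Re (\<integral>x. indicator (box l u) x * f x \<partial>lborel)"
      by (rule integral_bounded_linear[OF bounded_linear_Re ii])
    finally have "(\<integral>x. indicator (box l u) x * Re (f x) \<partial>lborel) = Re (\<integral>x. indicator (box l u) x * f x \<partial>lborel)" .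
    thus "(\<integral>x. indicator (box l u) x * Re (f x) \<partial>lborel) = 0" using z by simp
  qed (use f in auto)
  moreover have "AE x in lborel. Im (f x) = 0"
  proof (rule ae_zero_boxes_real)
    fix l u :: 'a
    have ii: "integrable lborel (\<lambda>x. indicator (box l u) x * f x)"
    proof -
      have "(\<lambda>x. indicator (box l u) x * f x) = (\<lambda>x. indicator (box l u) x *\<^sub>R f x)"
        by (auto simp: fun_eq_iff indicator_def)
      thus ?thesis using integrable_mult_indicator[OF _ f, of "box l u"] by simp
    qed
    have "(\<integral>x. indicator (box l u) x * Im (f x) \<partial>lborel) = (\<integral>x. Im (indicator (box l u) x * f x) \<partial>lborel)"
      by (rule Bochner_Integration.integral_cong) (auto simp: indicator_def)
    also have "\<dots> = Im (\<integral>x. indicator (box l u) x * f x \<partial>lborel)"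
      by (rule integral_bounded_linear[OF bounded_linear_Im ii])
    finally have "(\<integral>x. indicator (box l u) x * Im (f x) \<partial>lborel) = Im (\<integral>x. indicator (box l u) x * f x \<partial>lborel)" .
    thus "(\<integral>x. indicator (box l u) x * Im (f x) \<partial>lborel) = 0" using z by simp
  qed (use f in auto)
  ultimately show ?thesis by eventually_elim (simp add: complex_eq_iff)
qed


definition ftd :: "('a::euclidean_space \<Rightarrow> complex) \<Rightarrow> 'a \<Rightarrow> complex" where
  "ftd g \<xi> = (\<integral>y. g y * exp (- \<i> * complex_of_real (\<xi> \<bullet> y)) \<partial>lborel)"

definition Nd :: "real \<Rightarrow> nat \<Rightarrow> real" where
  "Nd \<sigma> d = (1 / sqrt (2 * pi * \<sigma>\<^sup>2)) ^ d"

lemma Qd_inner: "Qd v = v \<bullet> v"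
  unfolding Qd_def by (simp add: euclidean_inner[of v v] power2_eq_square)

lemma Qd_nonneg: "Qd v \<ge> 0" unfolding Qd_def by (simp add: sum_nonneg)

lemma Qd_neg[simp]: "Qd (- v) = Qd v" unfolding Qd_def by simp

lemma Kd_exp:
  assumes s: "\<sigma> > 0"
  shows "Kd \<sigma> (v::'a::euclidean_space) = Nd \<sigma> DIM('a) * exp (- Qd v / (2 * \<sigma>\<^sup>2))"
proof -
  have "Kd \<sigma> v = (\<Prod>b\<in>(Basis::'a set). 1 / sqrt (2 * pi * \<sigma>\<^sup>2) * exp (- (v \<bullet> b)\<^sup>2 / (2 * \<sigma>\<^sup>2)))"
    unfolding Kd_def normal_density_def by simp
  also have "\<dots> = (\<Prod>b\<in>(Basis::'a set). 1 / sqrt (2 * pi * \<sigma>\<^sup>2)) * (\<Prod>b\<in>(Basis::'a set). exp (- (v \<bullet> b)\<^sup>2 / (2 * \<sigma>\<^sup>2)))"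
    by (rule prod.distrib)
  also have "(\<Prod>b\<in>(Basis::'a set). exp (- (v \<bullet> b)\<^sup>2 / (2 * \<sigma>\<^sup>2))) = exp (\<Sum>b\<in>(Basis::'a set). - (v \<bullet> b)\<^sup>2 / (2 * \<sigma>\<^sup>2))"
    by (simp add: exp_sum)
  also have "(\<Sum>b\<in>(Basis::'a set). - (v \<bullet> b)\<^sup>2 / (2 * \<sigma>\<^sup>2)) = - Qd v / (2 * \<sigma>\<^sup>2)"
    unfolding Qd_def by (simp add: sum_divide_distrib[symmetric] sum_negf)
  finally show ?thesis unfolding Nd_def by simp
qed

lemma Kd_nonneg: "Kd \<sigma> v \<ge> 0"
  unfolding Kd_def by (simp add: prod_nonneg)

lemma Kd_neg[simp]: "Kd \<sigma> (- v) = Kd \<sigma> v"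
  unfolding Kd_def normal_density_def by simp

lemma Nd_pos: "\<sigma> > 0 \<Longrightarrow> Nd \<sigma> d > 0" unfolding Nd_def by simp

lemma Kd_le: assumes s: "\<sigma> > 0" shows "Kd \<sigma> (v::'a::euclidean_space) \<le> Nd \<sigma> DIM('a)"
proof -
  have "exp (- Qd v / (2 * \<sigma>\<^sup>2)) \<le> 1" using Qd_nonneg[of v] s by simp
  thus ?thesis using Kd_exp[OF s, of v] Nd_pos[OF s, of "DIM('a)"]
    by (metis mult.right_neutral mult_left_mono less_imp_le)
qed

lemma Kd_measurable[measurable]: "Kd \<sigma> \<in> borel_measurable borel"
  unfolding Kd_def by measurable

lemma Kd_integrable:
  assumes s: "\<sigma> > 0"
  shows "integrable lborel (Kd \<sigma> :: 'a::euclidean_space \<Rightarrow> real)"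
  unfolding Kd_def
  using lborel_basis_prod(1)[of "\<lambda>_. normal_density 0 \<sigma>"] integrable_normal_density[OF s] by simp

lemma Kd_integral:
  assumes s: "\<sigma> > 0"
  shows "(\<integral>v. Kd \<sigma> v \<partial>(lborel :: 'a::euclidean_space measure)) = 1"
  unfolding Kd_def
  using lborel_basis_prod(2)[of "\<lambda>_. normal_density 0 \<sigma>"] integrable_normal_density[OF s]
    integral_normal_density[OF s] by simp

lemma lborel_distr_reflect: "distr lborel borel (\<lambda>x. a - x) = (lborel :: 'a::euclidean_space measure)"
proof -
  have "lborel = density (distr lborel borel (\<lambda>x. a + (-1::real) *\<^sub>R x)) (\<lambda>_. \<bar>-1::real\<bar>^DIM('a))"
    by (rule lborel_affine) simp
  thus ?thesis by (simp add: density_1)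
qed

lemma integral_reflect:
  fixes f :: "'a::euclidean_space \<Rightarrow> 'b::{banach,second_countable_topology}"
  assumes [measurable]: "f \<in> borel_measurable borel"
  shows "(\<integral>w. f (a - w) \<partial>lborel) = (\<integral>v. f v \<partial>lborel)"
proof -
  have "(\<integral>v. f v \<partial>lborel) = (\<integral>v. f v \<partial>(distr lborel borel (\<lambda>x. a - x)))"
    by (simp add: lborel_distr_reflect)
  also have "\<dots> = (\<integral>w. f (a - w) \<partial>lborel)"
    by (rule integral_distr) auto
  finally show ?thesis by simp
qed

lemma integrable_reflect:
  fixes f :: "'a::euclidean_space \<Rightarrow> 'b::{banach,second_countable_topology}"
  assumes [measurable]: "f \<in> borel_measurable borel"
  shows "integrable lborel (\<lambda>w. f (a - w)) \<longleftrightarrow> integrable lborel f"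
proof -
  have "integrable lborel f \<longleftrightarrow> integrable (distr lborel borel (\<lambda>x. a - x)) f"
    by (simp add: lborel_distr_reflect)
  also have "\<dots> \<longleftrightarrow> integrable lborel (\<lambda>w. f (a - w))"
    by (rule integrable_distr_eq) auto
  finally show ?thesis by simp
qed


abbreviation E :: "real \<Rightarrow> complex" where "E t \<equiv> exp (\<i> * complex_of_real t)"

lemma norm_E[simp]: "norm (E t) = 1" by (simp add: norm_exp_eq_Re)

lemma E_add: "E (s + t) = E s * E t" by (simp add: algebra_simps exp_add[symmetric])

lemma E_diff_inner: "E ((a - v) \<bullet> \<xi>) = E (a \<bullet> \<xi>) * E (v \<bullet> (- \<xi>))"
proof -
  have "(a - v) \<bullet> \<xi> = a \<bullet> \<xi> + v \<bullet> (- \<xi>)" by (simp add: inner_diff_left)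
  hence "E ((a - v) \<bullet> \<xi>) = E (a \<bullet> \<xi> + v \<bullet> (- \<xi>))" by (simp only:)
  thus ?thesis by (simp only: E_add)
qed

lemma gauss_conv_E:
  assumes s: "\<sigma> > 0"
  shows "(\<integral>w. complex_of_real (Kd \<sigma> (a - w)) * E (w \<bullet> \<xi>) \<partial>lborel)
       = E (a \<bullet> \<xi>) * complex_of_real (exp (- \<sigma>\<^sup>2 * Qd \<xi> / 2))"
proof -
  let ?f = "\<lambda>v. complex_of_real (Kd \<sigma> v) * E ((a - v) \<bullet> \<xi>)"
  have "(\<integral>w. complex_of_real (Kd \<sigma> (a - w)) * E (w \<bullet> \<xi>) \<partial>lborel) = (\<integral>w. ?f (a - w) \<partial>lborel)"
    by simp
  also have "\<dots> = (\<integral>v. ?f v \<partial>lborel)"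
    by (rule integral_reflect) measurable
  also have "\<dots> = (\<integral>v. E (a \<bullet> \<xi>) * (complex_of_real (Kd \<sigma> v) * E (v \<bullet> (- \<xi>))) \<partial>lborel)"
    by (rule Bochner_Integration.integral_cong) (simp_all only: E_diff_inner mult.assoc mult.left_commute mult.commute)
  also have "\<dots> = E (a \<bullet> \<xi>) * (\<integral>v. complex_of_real (Kd \<sigma> v) * E (v \<bullet> (- \<xi>)) \<partial>lborel)"
    by (rule integral_mult_right_zero)
  also have "\<dots> = E (a \<bullet> \<xi>) * complex_of_real (exp (- \<sigma>\<^sup>2 * Qd \<xi> / 2))"
    using gauss_ft(2)[OF s, of "- \<xi>"] by simp
  finally show ?thesis .
qed

lemma S1:
  fixes G :: "'a::euclidean_space \<Rightarrow> complex"
  assumes G: "integrable lborel G" and s: "\<sigma> > 0"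
  shows "(\<integral>w. (\<integral>\<xi>. G \<xi> * E (w \<bullet> \<xi>) \<partial>lborel) * complex_of_real (Kd \<sigma> (a - w)) \<partial>lborel)
       = (\<integral>\<xi>. G \<xi> * E (a \<bullet> \<xi>) * complex_of_real (exp (- \<sigma>\<^sup>2 * Qd \<xi> / 2)) \<partial>lborel)"
proof -
  let ?k = "\<lambda>w. complex_of_real (Kd \<sigma> (a - w))"
  have ki: "integrable lborel ?k"
  proof -
    have "integrable lborel (\<lambda>v. complex_of_real (Kd \<sigma> v))" by (rule integrable_of_real) (rule Kd_integrable[OF s])
    thus ?thesis using integrable_reflect[of "\<lambda>v. complex_of_real (Kd \<sigma> v)" a] by simp
  qed
  have em: "(\<lambda>(w, \<xi>). E (w \<bullet> \<xi>)) \<in> borel_measurable (lborel \<Otimes>\<^sub>M lborel)" by measurable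
  have "(\<integral>w. (\<integral>\<xi>. G \<xi> * E (w \<bullet> \<xi>) \<partial>lborel) * ?k w \<partial>lborel)
      = (\<integral>w. (\<integral>\<xi>. ?k w * G \<xi> * E (w \<bullet> \<xi>) \<partial>lborel) \<partial>lborel)"
  proof (rule Bochner_Integration.integral_cong[OF refl])
    fix w
    have "(\<integral>\<xi>. ?k w * G \<xi> * E (w \<bullet> \<xi>) \<partial>lborel) = ?k w * (\<integral>\<xi>. G \<xi> * E (w \<bullet> \<xi>) \<partial>lborel)"
      by (simp only: mult.assoc integral_mult_right_zero)
    thus "(\<integral>\<xi>. G \<xi> * E (w \<bullet> \<xi>) \<partial>lborel) * ?k w = (\<integral>\<xi>. ?k w * G \<xi> * E (w \<bullet> \<xi>) \<partial>lborel)"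
      by (metis mult.commute)
  qed
  also have "\<dots> = (\<integral>\<xi>. (\<integral>w. ?k w * G \<xi> * E (w \<bullet> \<xi>) \<partial>lborel) \<partial>lborel)"
    by (rule fubini_sep(2)[OF ki G em]) simp
  also have "\<dots> = (\<integral>\<xi>. G \<xi> * (\<integral>w. ?k w * E (w \<bullet> \<xi>) \<partial>lborel) \<partial>lborel)"
  proof (rule Bochner_Integration.integral_cong[OF refl])
    fix \<xi>
    have "(\<integral>w. ?k w * G \<xi> * E (w \<bullet> \<xi>) \<partial>lborel) = (\<integral>w. G \<xi> * (?k w * E (w \<bullet> \<xi>)) \<partial>lborel)"
      by (rule Bochner_Integration.integral_cong) (simp_all add: mult_ac)
    thus "(\<integral>w. ?k w * G \<xi> * E (w \<bullet> \<xi>) \<partial>lborel) = G \<xi> * (\<integral>w. ?k w * E (w \<bullet> \<xi>) \<partial>lborel)"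
      by (simp only: integral_mult_right_zero)
  qed
  also have "\<dots> = (\<integral>\<xi>. G \<xi> * E (a \<bullet> \<xi>) * complex_of_real (exp (- \<sigma>\<^sup>2 * Qd \<xi> / 2)) \<partial>lborel)"
    by (rule Bochner_Integration.integral_cong) (simp_all add: gauss_conv_E[OF s] mult_ac)
  finally show ?thesis .
qed


lemma exp_Kd_inv:
  assumes s: "\<sigma> > 0"
  shows "exp (- \<sigma>\<^sup>2 * Qd (\<xi>::'a::euclidean_space) / 2) = Kd (1/\<sigma>) \<xi> / Nd (1/\<sigma>) DIM('a)"
proof -
  have "Kd (1/\<sigma>) \<xi> = Nd (1/\<sigma>) DIM('a) * exp (- Qd \<xi> / (2 * (1/\<sigma>)\<^sup>2))"
    by (rule Kd_exp) (use s in simp)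
  moreover have "- Qd \<xi> / (2 * (1/\<sigma>)\<^sup>2) = - \<sigma>\<^sup>2 * Qd \<xi> / 2"
    using s by (simp add: field_simps power2_eq_square)
  moreover have "Nd (1/\<sigma>) DIM('a) > 0" by (rule Nd_pos) (use s in simp)
  ultimately show ?thesis by simp
qed

lemma pow_aux: "inverse (a^d) / ((1/b)^d) = (inverse a * b :: real)^d"
  by (simp add: power_one_over power_mult_distrib divide_inverse power_inverse)

lemma const_identity:
  assumes s: "\<sigma> > 0"
  shows "inverse ((2 * pi) ^ d) / Nd (1/\<sigma>) d = Nd \<sigma> d"
proof -
  define r where "r = sqrt (2 * pi)"
  have r0: "r > 0" unfolding r_def by simp
  have rr: "2 * pi = r * r" unfolding r_def by simp
  have base: "inverse (2 * pi) * sqrt (2 * pi * (1/\<sigma>)\<^sup>2) = 1 / sqrt (2 * pi * \<sigma>\<^sup>2)"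
  proof -
    have a: "sqrt (2 * pi * (1/\<sigma>)\<^sup>2) = r / \<sigma>"
      using s unfolding r_def by (simp add: real_sqrt_mult power_divide real_sqrt_divide)
    have b: "sqrt (2 * pi * \<sigma>\<^sup>2) = r * \<sigma>"
      using s unfolding r_def by (simp add: real_sqrt_mult)
    show ?thesis unfolding a b using r0 s rr by (simp add: field_simps)
  qed
  have "inverse ((2 * pi) ^ d) / Nd (1/\<sigma>) d = (inverse (2 * pi) * sqrt (2 * pi * (1/\<sigma>)\<^sup>2)) ^ d"
    unfolding Nd_def by (rule pow_aux)
  also have "\<dots> = Nd \<sigma> d" unfolding Nd_def base ..
  finally show ?thesis .
qed

lemma gauss_inv:
  assumes s: "\<sigma> > 0"
  shows "integrable lborel (\<lambda>\<xi>::'a::euclidean_space. complex_of_real (exp (- \<sigma>\<^sup>2 * Qd \<xi> / 2)))"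
    and "complex_of_real (inverse ((2 * pi) ^ DIM('a))) *
          (\<integral>\<xi>. complex_of_real (exp (- \<sigma>\<^sup>2 * Qd \<xi> / 2)) * E (\<xi> \<bullet> v) \<partial>(lborel::'a measure))
        = complex_of_real (Kd \<sigma> v)"
proof -
  let ?N = "Nd (1/\<sigma>) DIM('a)"
  have s': "1/\<sigma> > 0" using s by simp
  have eq: "complex_of_real (exp (- \<sigma>\<^sup>2 * Qd \<xi> / 2)) = complex_of_real (inverse ?N) * complex_of_real (Kd (1/\<sigma>) \<xi>)" for \<xi> :: 'a
  proof -
    have r: "exp (- \<sigma>\<^sup>2 * Qd \<xi> / 2) = inverse ?N * Kd (1/\<sigma>) \<xi>"
      unfolding exp_Kd_inv[OF s, of \<xi>] by (simp only: divide_inverse mult.commute)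
    show ?thesis by (simp only: r of_real_mult)
  qed
  show "integrable lborel (\<lambda>\<xi>::'a::euclidean_space. complex_of_real (exp (- \<sigma>\<^sup>2 * Qd \<xi> / 2)))"
    unfolding eq by (intro integrable_mult_right integrable_of_real Kd_integrable s')
  have "(\<integral>\<xi>. complex_of_real (exp (- \<sigma>\<^sup>2 * Qd \<xi> / 2)) * E (\<xi> \<bullet> v) \<partial>(lborel::'a measure))
      = complex_of_real (inverse ?N) * (\<integral>\<xi>. complex_of_real (Kd (1/\<sigma>) \<xi>) * E (\<xi> \<bullet> v) \<partial>(lborel::'a measure))"
    unfolding eq by (simp only: mult.assoc integral_mult_right_zero)
  also have "\<dots> = complex_of_real (inverse ?N) * complex_of_real (exp (- (1/\<sigma>)\<^sup>2 * Qd v / 2))"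
    using gauss_ft(2)[OF s', of v] by simp
  finally have 1: "(\<integral>\<xi>. complex_of_real (exp (- \<sigma>\<^sup>2 * Qd \<xi> / 2)) * E (\<xi> \<bullet> v) \<partial>(lborel::'a measure))
      = complex_of_real (inverse ?N * exp (- (1/\<sigma>)\<^sup>2 * Qd v / 2))" by simp
  have 2: "Kd \<sigma> v = Nd \<sigma> DIM('a) * exp (- Qd v / (2 * \<sigma>\<^sup>2))" by (rule Kd_exp[OF s])
  have 3: "- (1/\<sigma>)\<^sup>2 * Qd v / 2 = - Qd v / (2 * \<sigma>\<^sup>2)"
    using s by (simp add: field_simps power2_eq_square)
  have 4: "inverse ((2 * pi) ^ DIM('a)) * inverse ?N = Nd \<sigma> DIM('a)"
    using const_identity[OF s, of "DIM('a)"] by (simp add: divide_inverse)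
  show "complex_of_real (inverse ((2 * pi) ^ DIM('a))) *
          (\<integral>\<xi>. complex_of_real (exp (- \<sigma>\<^sup>2 * Qd \<xi> / 2)) * E (\<xi> \<bullet> v) \<partial>(lborel::'a measure))
        = complex_of_real (Kd \<sigma> v)"
  proof -
    have "complex_of_real (inverse ((2 * pi) ^ DIM('a))) * complex_of_real (inverse ?N * exp (- Qd v / (2 * \<sigma>\<^sup>2)))
        = complex_of_real ((inverse ((2 * pi) ^ DIM('a)) * inverse ?N) * exp (- Qd v / (2 * \<sigma>\<^sup>2)))"
      by (simp only: of_real_mult mult.assoc)
    thus ?thesis unfolding 1 2 3 4 .
  qed
qed

lemma E_shift: "exp (- \<i> * complex_of_real (\<xi> \<bullet> y)) * E (a \<bullet> \<xi>) = E (\<xi> \<bullet> (a - y))"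
proof -
  have "\<xi> \<bullet> (a - y) = a \<bullet> \<xi> + (- (\<xi> \<bullet> y))" by (simp add: inner_diff_right inner_commute)
  hence "E (\<xi> \<bullet> (a - y)) = E (a \<bullet> \<xi> + (- (\<xi> \<bullet> y)))" by (simp only:)
  also have "\<dots> = E (a \<bullet> \<xi>) * E (- (\<xi> \<bullet> y))" by (rule E_add)
  finally show ?thesis by (simp add: mult.commute)
qed

lemma S2:
  fixes g :: "'a::euclidean_space \<Rightarrow> complex"
  assumes g: "integrable lborel g" and s: "\<sigma> > 0"
  shows "complex_of_real (inverse ((2 * pi) ^ DIM('a))) *
           (\<integral>\<xi>. ftd g \<xi> * E (a \<bullet> \<xi>) * complex_of_real (exp (- \<sigma>\<^sup>2 * Qd \<xi> / 2)) \<partial>lborel)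
         = (\<integral>w. g w * complex_of_real (Kd \<sigma> (a - w)) \<partial>lborel)"
proof -
  let ?c = "complex_of_real (inverse ((2 * pi) ^ DIM('a)))"
  let ?e = "\<lambda>\<xi>::'a. complex_of_real (exp (- \<sigma>\<^sup>2 * Qd \<xi> / 2))"
  have ei: "integrable lborel ?e" by (rule gauss_inv(1)[OF s])
  have em: "(\<lambda>(\<xi>, y). E (\<xi> \<bullet> (a - y))) \<in> borel_measurable (lborel \<Otimes>\<^sub>M (lborel::'a measure))" by measurable
  have "(\<integral>\<xi>. ftd g \<xi> * E (a \<bullet> \<xi>) * ?e \<xi> \<partial>lborel) = (\<integral>\<xi>. (\<integral>y. ?e \<xi> * g y * E (\<xi> \<bullet> (a - y)) \<partial>lborel) \<partial>lborel)"
  proof (rule Bochner_Integration.integral_cong[OF refl])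
    fix \<xi> :: 'a
    have "ftd g \<xi> * E (a \<bullet> \<xi>) * ?e \<xi> = ftd g \<xi> * (E (a \<bullet> \<xi>) * ?e \<xi>)"
      by (rule mult.assoc)
    also have "\<dots> = (\<integral>y. g y * exp (- \<i> * complex_of_real (\<xi> \<bullet> y)) * (E (a \<bullet> \<xi>) * ?e \<xi>) \<partial>lborel)"
      unfolding ftd_def by (rule integral_mult_left_zero[symmetric])
    also have "\<dots> = (\<integral>y. ?e \<xi> * g y * E (\<xi> \<bullet> (a - y)) \<partial>lborel)"
    proof (rule Bochner_Integration.integral_cong[OF refl])
      fix y
      have "g y * exp (- \<i> * complex_of_real (\<xi> \<bullet> y)) * (E (a \<bullet> \<xi>) * ?e \<xi>)
          = ?e \<xi> * g y * (exp (- \<i> * complex_of_real (\<xi> \<bullet> y)) * E (a \<bullet> \<xi>))"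
        by (simp only: mult_ac)
      thus "g y * exp (- \<i> * complex_of_real (\<xi> \<bullet> y)) * (E (a \<bullet> \<xi>) * ?e \<xi>) = ?e \<xi> * g y * E (\<xi> \<bullet> (a - y))"
        by (simp only: E_shift)
    qed
    finally show "ftd g \<xi> * E (a \<bullet> \<xi>) * ?e \<xi> = (\<integral>y. ?e \<xi> * g y * E (\<xi> \<bullet> (a - y)) \<partial>lborel)" .
  qed
  also have "\<dots> = (\<integral>y. (\<integral>\<xi>. ?e \<xi> * g y * E (\<xi> \<bullet> (a - y)) \<partial>lborel) \<partial>lborel)"
    by (rule fubini_sep(2)[OF ei g em]) simp
  also have "\<dots> = (\<integral>y. g y * (\<integral>\<xi>. ?e \<xi> * E (\<xi> \<bullet> (a - y)) \<partial>lborel) \<partial>lborel)"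
  proof (rule Bochner_Integration.integral_cong[OF refl])
    fix y
    have "(\<integral>\<xi>. ?e \<xi> * g y * E (\<xi> \<bullet> (a - y)) \<partial>lborel) = (\<integral>\<xi>. g y * (?e \<xi> * E (\<xi> \<bullet> (a - y))) \<partial>lborel)"
      by (rule Bochner_Integration.integral_cong[OF refl]) (simp only: mult_ac)
    thus "(\<integral>\<xi>. ?e \<xi> * g y * E (\<xi> \<bullet> (a - y)) \<partial>lborel) = g y * (\<integral>\<xi>. ?e \<xi> * E (\<xi> \<bullet> (a - y)) \<partial>lborel)"
      by (simp only: integral_mult_right_zero)
  qed
  finally have 0: "(\<integral>\<xi>. ftd g \<xi> * E (a \<bullet> \<xi>) * ?e \<xi> \<partial>lborel)
      = (\<integral>y. g y * (\<integral>\<xi>. ?e \<xi> * E (\<xi> \<bullet> (a - y)) \<partial>lborel) \<partial>lborel)" .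
  have 1: "(\<integral>y. g y * (?c * (\<integral>\<xi>. ?e \<xi> * E (\<xi> \<bullet> (a - y)) \<partial>lborel)) \<partial>lborel)
      = ?c * (\<integral>y. g y * (\<integral>\<xi>. ?e \<xi> * E (\<xi> \<bullet> (a - y)) \<partial>lborel) \<partial>lborel)"
  proof -
    have "(\<integral>y. g y * (?c * (\<integral>\<xi>. ?e \<xi> * E (\<xi> \<bullet> (a - y)) \<partial>lborel)) \<partial>lborel)
        = (\<integral>y. ?c * (g y * (\<integral>\<xi>. ?e \<xi> * E (\<xi> \<bullet> (a - y)) \<partial>lborel)) \<partial>lborel)"
      by (simp only: mult.left_commute)
    thus ?thesis by (simp only: integral_mult_right_zero)
  qed
  show ?thesis unfolding 0 1[symmetric] gauss_inv(2)[OF s] ..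
qed


lemma exponent_identity:
  fixes p q r T k :: real
  assumes T: "T > 0" and kd: "k = 1 + T"
  shows "- r / 2 - (p - 2 * q + r) / (2 * T)
       = - p / (2 * k) - (p / k\<^sup>2 - 2 * (q / k) + r) / (2 * (T / k))"
proof -
  have nz: "k \<noteq> 0" "T \<noteq> 0" using T kd by auto
  have "- r / 2 - (p - 2 * q + r) / (2 * T) - (- p / (2 * k) - (p / k\<^sup>2 - 2 * (q / k) + r) / (2 * (T / k)))
     = (p * (T + 1 - k) + r * (k - 1 - T) * k) / (2 * T * k)"
    using nz by (simp add: field_simps power2_eq_square)
  also have "\<dots> = 0" using kd by simp
  finally show ?thesis by simp
qed

lemma gauss_prod:
  assumes t: "\<tau> > 0"
  defines "k \<equiv> 1 + \<tau>\<^sup>2"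
  defines "\<sigma> \<equiv> \<tau> / sqrt k"
  shows "Kd 1 w * Kd \<tau> (b - w) =
     (Nd 1 DIM('a) * Nd \<tau> DIM('a) / Nd \<sigma> DIM('a) * exp (- Qd b / (2 * k))) * Kd \<sigma> ((1 / k) *\<^sub>R b - (w::'a::euclidean_space))"
proof -
  have k0: "k > 0" unfolding k_def by (simp add: add_pos_nonneg)
  have s0: "\<sigma> > 0" unfolding \<sigma>_def using t k0 by simp
  have s2: "\<sigma>\<^sup>2 = \<tau>\<^sup>2 / k" unfolding \<sigma>_def using k0 by (simp add: power_divide)
  let ?p = "b \<bullet> b" and ?q = "b \<bullet> w" and ?r = "w \<bullet> w"
  have Qw: "Qd w = ?r" by (simp add: Qd_inner)
  have Qbw: "Qd (b - w) = ?p - 2 * ?q + ?r"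
    by (simp add: Qd_inner inner_diff_left inner_diff_right inner_commute)
  have Qaw: "Qd ((1 / k) *\<^sub>R b - w) = ?p / k\<^sup>2 - 2 * (?q / k) + ?r"
    by (simp add: Qd_inner inner_diff_left inner_diff_right inner_commute power2_eq_square)
  have Qb: "Qd b = ?p" by (simp add: Qd_inner)
  have T: "\<tau>\<^sup>2 > 0" using t by simp
  have ex: "(- Qd w / (2 * 1\<^sup>2)) + (- Qd (b - w) / (2 * \<tau>\<^sup>2)) = (- Qd b / (2 * k)) + (- Qd ((1 / k) *\<^sub>R b - w) / (2 * \<sigma>\<^sup>2))"
    unfolding Qw Qbw Qaw s2 Qb using exponent_identity[OF T k_def[THEN meta_eq_to_obj_eq], where p="?p" and q="?q" and r="?r"] k0 t by (simp add: field_simps)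
  have N: "Nd \<sigma> DIM('a) > 0" by (rule Nd_pos[OF s0])
  have "Kd 1 w * Kd \<tau> (b - w) = Nd 1 DIM('a) * Nd \<tau> DIM('a) * exp ((- Qd w / (2 * 1\<^sup>2)) + (- Qd (b - w) / (2 * \<tau>\<^sup>2)))"
    by (simp only: Kd_exp[OF t] Kd_exp[OF zero_less_one] exp_add mult_ac)
  also have "\<dots> = Nd 1 DIM('a) * Nd \<tau> DIM('a) * (exp (- Qd b / (2 * k)) * exp (- Qd ((1 / k) *\<^sub>R b - w) / (2 * \<sigma>\<^sup>2)))"
    unfolding ex by (simp only: exp_add)
  also have "\<dots> = (Nd 1 DIM('a) * Nd \<tau> DIM('a) / Nd \<sigma> DIM('a) * exp (- Qd b / (2 * k))) * Kd \<sigma> ((1 / k) *\<^sub>R b - w)"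
    using N by (simp add: Kd_exp[OF s0])
  finally show ?thesis .
qed


lemma Kd_scale:
  assumes t: "\<tau> > 0"
  shows "\<tau> ^ DIM('a) * Kd \<tau> (\<tau> *\<^sub>R z) = Kd 1 (z::'a::euclidean_space)"
proof -
  have "Kd \<tau> (\<tau> *\<^sub>R z) = (\<Prod>b\<in>(Basis::'a set). std_normal_density (z \<bullet> b) / \<tau>)"
    unfolding Kd_def by (intro prod.cong refl) (simp add: normal_density_scale[OF t])
  also have "\<dots> = Kd 1 z / \<tau> ^ DIM('a)"
    unfolding Kd_def by (simp add: prod_dividef)
  finally show ?thesis using t by simp
qed

lemma phi_eq:
  assumes t: "\<tau> > 0" and A[measurable]: "A \<in> sets borel"
  shows "(\<integral>b. indicator A b * Kd \<tau> (b - w) \<partial>lborel) = (\<integral>z. indicator A (w + \<tau> *\<^sub>R z) * Kd 1 z \<partial>(lborel::'a::euclidean_space measure))"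
proof -
  let ?f = "\<lambda>b::'a. indicator A b * Kd \<tau> (b - w)"
  have fm[measurable]: "?f \<in> borel_measurable borel" by measurable
  have "(\<integral>b. ?f b \<partial>lborel) = (\<integral>b. ?f b \<partial>(density (distr lborel borel (\<lambda>z. w + \<tau> *\<^sub>R z)) (\<lambda>_. \<bar>\<tau>\<bar>^DIM('a))))"
    using lborel_affine[of \<tau> w] t by simp
  also have "\<dots> = (\<integral>b. \<bar>\<tau>\<bar>^DIM('a) *\<^sub>R ?f b \<partial>(distr lborel borel (\<lambda>z. w + \<tau> *\<^sub>R z)))"
    by (rule integral_density) auto
  also have "\<dots> = (\<integral>z. \<bar>\<tau>\<bar>^DIM('a) *\<^sub>R ?f (w + \<tau> *\<^sub>R z) \<partial>lborel)"
    by (rule integral_distr) auto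
  also have "\<dots> = (\<integral>z. indicator A (w + \<tau> *\<^sub>R z) * Kd 1 z \<partial>lborel)"
  proof (rule Bochner_Integration.integral_cong[OF refl])
    fix z :: 'a
    have "\<bar>\<tau>\<bar>^DIM('a) * Kd \<tau> (w + \<tau> *\<^sub>R z - w) = Kd 1 z" using Kd_scale[OF t, of z] t by simp
    thus "\<bar>\<tau>\<bar>^DIM('a) *\<^sub>R ?f (w + \<tau> *\<^sub>R z) = indicator A (w + \<tau> *\<^sub>R z) * Kd 1 z"
      by (simp add: mult_ac)
  qed
  finally show ?thesis .
qed

lemma phi_bounds:
  assumes A[measurable]: "A \<in> sets borel"
  shows "0 \<le> (\<integral>z. indicator A (w + \<tau> *\<^sub>R z) * Kd 1 z \<partial>(lborel::'a::euclidean_space measure))"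
    and "(\<integral>z. indicator A (w + \<tau> *\<^sub>R z) * Kd 1 z \<partial>(lborel::'a::euclidean_space measure)) \<le> 1"
proof -
  show "0 \<le> (\<integral>z. indicator A (w + \<tau> *\<^sub>R z) * Kd 1 z \<partial>(lborel::'a::euclidean_space measure))"
    by (rule integral_nonneg_AE) (auto simp: Kd_nonneg)
  have "(\<integral>z. indicator A (w + \<tau> *\<^sub>R z) * Kd 1 z \<partial>(lborel::'a::euclidean_space measure)) \<le> (\<integral>z. Kd 1 z \<partial>(lborel::'a measure))"
    by (rule integral_mono)
       (auto intro!: Bochner_Integration.integrable_bound[OF Kd_integrable[OF zero_less_one]]
             simp: Kd_nonneg Kd_integrable indicator_def)
  thus "(\<integral>z. indicator A (w + \<tau> *\<^sub>R z) * Kd 1 z \<partial>(lborel::'a::euclidean_space measure)) \<le> 1"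
    using Kd_integral[OF zero_less_one, where 'a='a] by simp
qed

lemma phi_lim:
  fixes w :: "'a::euclidean_space"
  assumes w: "w \<in> box l r \<or> w \<notin> cbox l r"
    and tl: "t \<longlonglongrightarrow> 0"
  shows "(\<lambda>n. \<integral>z. indicator (box l r) (w + t n *\<^sub>R z) * Kd 1 z \<partial>lborel) \<longlonglongrightarrow> indicator (box l r) w"
proof -
  have lim: "(\<lambda>n. \<integral>z. indicator (box l r) (w + t n *\<^sub>R z) * Kd 1 z \<partial>lborel) \<longlonglongrightarrow> (\<integral>z. indicator (box l r) w * Kd 1 z \<partial>(lborel::'a measure))"
  proof (rule integral_dominated_convergence[where w="Kd 1"])
    show "integrable lborel (Kd 1 :: 'a \<Rightarrow> real)" by (rule Kd_integrable) simp
    show "AE z in lborel. (\<lambda>n. indicator (box l r) (w + t n *\<^sub>R z) * Kd 1 z) \<longlonglongrightarrow> indicator (box l r) w * Kd 1 z"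
    proof (rule AE_I2)
      fix z :: 'a
      have c: "(\<lambda>n. w + t n *\<^sub>R z) \<longlonglongrightarrow> w"
        using tendsto_add[OF tendsto_const tendsto_scaleR[OF tl tendsto_const, of z]] by simp
      have "eventually (\<lambda>n. indicator (box l r) (w + t n *\<^sub>R z) = (indicator (box l r) w :: real)) sequentially"
        using w
      proof
        assume wb: "w \<in> box l r"
        have "eventually (\<lambda>n. w + t n *\<^sub>R z \<in> box l r) sequentially"
          by (rule topological_tendstoD[OF c open_box wb])
        thus ?thesis by eventually_elim (use wb in simp)
      next
        assume wb: "w \<notin> cbox l r"
        have "eventually (\<lambda>n. w + t n *\<^sub>R z \<in> - cbox l r) sequentially"
          by (rule topological_tendstoD[OF c]) (use wb in auto)
        thus ?thesis by eventually_elim (use wb box_subset_cbox in \<open>auto simp: indicator_def\<close>)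
      qed
      thus "(\<lambda>n. indicator (box l r) (w + t n *\<^sub>R z) * Kd 1 z) \<longlonglongrightarrow> indicator (box l r) w * Kd 1 z"
      proof -
        assume ev: "eventually (\<lambda>n. indicator (box l r) (w + t n *\<^sub>R z) = (indicator (box l r) w :: real)) sequentially"
        have "eventually (\<lambda>n. indicator (box l r) w * Kd 1 z = indicator (box l r) (w + t n *\<^sub>R z) * Kd 1 z) sequentially"
          using ev by eventually_elim simp
        thus ?thesis by (rule Lim_transform_eventually[OF tendsto_const])
      qed
    qed
    fix n
    show "AE z in lborel. norm (indicator (box l r) (w + t n *\<^sub>R z) * Kd 1 z) \<le> Kd 1 z"
      by (auto simp: Kd_nonneg indicator_def)
  qed auto
  moreover have "(\<integral>z. indicator (box l r) w * Kd 1 z \<partial>(lborel::'a measure)) = indicator (box l r) w"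
    using Kd_integral[OF zero_less_one, where 'a='a] by simp
  ultimately show ?thesis using Kd_integral[OF zero_less_one, where 'a='a] by simp
qed


lemma box_zero:
  fixes H :: "'a::euclidean_space \<Rightarrow> complex"
  assumes H: "integrable lborel H"
    and z: "\<And>b \<tau>. \<tau> > 0 \<Longrightarrow> (\<integral>w. H w * complex_of_real (Kd \<tau> (b - w)) \<partial>lborel) = 0"
  shows "(\<integral>w. indicator (box l r) w * H w \<partial>lborel) = 0"
proof -
  let ?B = "box l r :: 'a set"
  define \<phi> where "\<phi> \<tau> w = (\<integral>z. indicator ?B (w + \<tau> *\<^sub>R z) * Kd 1 z \<partial>(lborel::'a measure))" for \<tau> w
  have Hm[measurable]: "H \<in> borel_measurable borel" using H by auto
  have \<phi>m[measurable]: "\<phi> \<tau> \<in> borel_measurable borel" for \<tau>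
    unfolding \<phi>_def by measurable
  have \<phi>b: "0 \<le> \<phi> \<tau> w" "\<phi> \<tau> w \<le> 1" for \<tau> w
    unfolding \<phi>_def using phi_bounds[of ?B w \<tau>] by auto
  have step1: "(\<integral>w. H w * complex_of_real (\<phi> \<tau> w) \<partial>lborel) = 0" if t: "\<tau> > 0" for \<tau>
  proof -
    let ?F = "\<lambda>w b. H w * complex_of_real (indicator ?B b * Kd \<tau> (b - w))"
    have Fm: "(\<lambda>(w, b). ?F w b) \<in> borel_measurable (lborel \<Otimes>\<^sub>M lborel)" by measurable
    have nF: "(\<integral>b. norm (?F w b) \<partial>lborel) = norm (H w) * \<phi> \<tau> w" for w
    proof -
      have "(\<integral>b. norm (?F w b) \<partial>lborel) = (\<integral>b. norm (H w) * (indicator ?B b * Kd \<tau> (b - w)) \<partial>lborel)"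
        by (rule Bochner_Integration.integral_cong[OF refl]) (simp add: norm_mult Kd_nonneg abs_mult)
      also have "\<dots> = norm (H w) * (\<integral>b. indicator ?B b * Kd \<tau> (b - w) \<partial>lborel)"
        by (rule integral_mult_right_zero)
      also have "\<dots> = norm (H w) * \<phi> \<tau> w"
        unfolding \<phi>_def by (subst phi_eq[OF t]) auto
      finally show ?thesis .
    qed
    have Kdi: "integrable lborel (\<lambda>b. Kd \<tau> (b - w))" for w
    proof -
      have "integrable lborel (\<lambda>b. Kd \<tau> (w - b))"
        using integrable_reflect[of "Kd \<tau>" w] Kd_integrable[OF t] by simp
      moreover have "(\<lambda>b. Kd \<tau> (w - b)) = (\<lambda>b. Kd \<tau> (b - w))"
        by (rule ext) (metis Kd_neg minus_diff_eq)
      ultimately show ?thesis by simp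
    qed
    have intF: "integrable (lborel \<Otimes>\<^sub>M lborel) (\<lambda>(w, b). ?F w b)"
    proof (rule pair_sigma_finite.Fubini_integrable[OF pl Fm])
      show "integrable lborel (\<lambda>w. \<integral>b. norm (case (w, b) of (w, b) \<Rightarrow> ?F w b) \<partial>lborel)"
        unfolding case_prod_conv nF
        by (rule Bochner_Integration.integrable_bound[where f="\<lambda>w. norm (H w)"])
           (auto simp: H abs_mult \<phi>b intro!: mult_left_le)
      show "AE w in lborel. integrable lborel (\<lambda>b. case (w, b) of (w, b) \<Rightarrow> ?F w b)"
      proof (rule AE_I2)
        fix w
        show "integrable lborel (\<lambda>b. case (w, b) of (w, b) \<Rightarrow> ?F w b)"
          unfolding case_prod_conv
          by (rule Bochner_Integration.integrable_bound[where f="\<lambda>b. norm (H w) * Kd \<tau> (b - w)"])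
             (auto intro!: integrable_mult_right Kdi simp: norm_mult Kd_nonneg abs_mult indicator_def mult_left_le)
      qed
    qed
    have F1: "(\<integral>b. (\<integral>w. ?F w b \<partial>lborel) \<partial>lborel) = (\<integral>w. (\<integral>b. ?F w b \<partial>lborel) \<partial>lborel)"
      by (rule pair_sigma_finite.Fubini_integral[OF pl intF])
    have F2: "(\<integral>w. ?F w b \<partial>lborel) = 0" for b
    proof -
      have "(\<integral>w. ?F w b \<partial>lborel) = (\<integral>w. complex_of_real (indicator ?B b) * (H w * complex_of_real (Kd \<tau> (b - w))) \<partial>lborel)"
        by (rule Bochner_Integration.integral_cong[OF refl]) (simp add: mult_ac)
      also have "\<dots> = complex_of_real (indicator ?B b) * (\<integral>w. H w * complex_of_real (Kd \<tau> (b - w)) \<partial>lborel)"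
        by (rule integral_mult_right_zero)
      finally show ?thesis using z[OF t] by simp
    qed
    have F3: "(\<integral>b. ?F w b \<partial>lborel) = H w * complex_of_real (\<phi> \<tau> w)" for w
    proof -
      have "(\<integral>b. ?F w b \<partial>lborel) = H w * (\<integral>b. complex_of_real (indicator ?B b * Kd \<tau> (b - w)) \<partial>lborel)"
        by (rule integral_mult_right_zero)
      also have "\<dots> = H w * complex_of_real (\<integral>b. indicator ?B b * Kd \<tau> (b - w) \<partial>lborel)"
        by (simp only: integral_complex_of_real)
      also have "\<dots> = H w * complex_of_real (\<phi> \<tau> w)"
        unfolding \<phi>_def by (subst phi_eq[OF t]) auto
      finally show ?thesis .
    qed
    have "(\<integral>w. H w * complex_of_real (\<phi> \<tau> w) \<partial>lborel) = (\<integral>w. (\<integral>b. ?F w b \<partial>lborel) \<partial>lborel)"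
      by (simp only: F3)
    also have "\<dots> = (\<integral>b. (\<integral>w. ?F w b \<partial>lborel) \<partial>lborel)" by (rule F1[symmetric])
    also have "\<dots> = 0" by (simp only: F2 integral_zero)
    finally show ?thesis .
  qed
  let ?t = "\<lambda>n::nat. 1 / (real n + 1)"
  have tpos: "?t n > 0" for n by simp
  have tl: "?t \<longlonglongrightarrow> 0"
    using LIMSEQ_inverse_real_of_nat by (simp add: inverse_eq_divide add.commute)
  have "(\<lambda>n. \<integral>w. H w * complex_of_real (\<phi> (?t n) w) \<partial>lborel) \<longlonglongrightarrow> (\<integral>w. H w * complex_of_real (indicator ?B w) \<partial>lborel)"
  proof (rule integral_dominated_convergence[where w="\<lambda>w. norm (H w)"])
    show "integrable lborel (\<lambda>w. norm (H w))" using H by simp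
    have ae: "AE w in lborel. w \<notin> cbox l r - box l r"
      by (rule AE_not_in) (rule null_sets_cbox_Diff_box)
    show "AE w in lborel. (\<lambda>n. H w * complex_of_real (\<phi> (?t n) w)) \<longlonglongrightarrow> H w * complex_of_real (indicator ?B w)"
      using ae
    proof eventually_elim
      case (elim w)
      hence "w \<in> box l r \<or> w \<notin> cbox l r" by auto
      from phi_lim[OF this tl] have "(\<lambda>n. \<phi> (?t n) w) \<longlonglongrightarrow> indicator ?B w"
        unfolding \<phi>_def .
      thus ?case by (intro tendsto_mult tendsto_const tendsto_of_real)
    qed
    fix n
    show "AE w in lborel. norm (H w * complex_of_real (\<phi> (?t n) w)) \<le> norm (H w)"
      by (auto simp: norm_mult \<phi>b intro!: mult_left_le)
  qed auto
  moreover have "(\<lambda>n. \<integral>w. H w * complex_of_real (\<phi> (?t n) w) \<partial>lborel) = (\<lambda>n. 0)"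
    using step1[OF tpos] by simp
  ultimately have "(\<integral>w. H w * complex_of_real (indicator ?B w) \<partial>lborel) = 0"
    using LIMSEQ_unique tendsto_const by metis
  moreover have "(\<integral>w. indicator ?B w * H w \<partial>lborel) = (\<integral>w. H w * complex_of_real (indicator ?B w) \<partial>lborel)"
    by (rule Bochner_Integration.integral_cong[OF refl]) (simp add: indicator_def)
  ultimately show ?thesis by simp
qed


lemma Kd_shift_integrable:
  assumes s: "\<sigma> > 0"
  shows "integrable lborel (\<lambda>w. Kd \<sigma> (a - w :: 'a::euclidean_space))"
  using integrable_reflect[of "Kd \<sigma>" a] Kd_integrable[OF s] by simp

lemma Kd_pos: "\<sigma> > 0 \<Longrightarrow> Kd \<sigma> v > 0"
  unfolding Kd_def by (intro prod_pos) (simp add: normal_density_pos)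

lemma fourier_inversion:
  fixes g :: "real^'n::finite \<Rightarrow> complex"
  assumes g: "integrable lborel g" and G: "integrable lborel (ftd g)"
  shows "AE w in lborel. fourier_inv (ftd g) w = g w"
proof -
  define c where "c = complex_of_real (inverse ((2 * pi) ^ CARD('n)))"
  define I where "I w = (\<integral>\<xi>. ftd g \<xi> * E (w \<bullet> \<xi>) \<partial>lborel)" for w :: "real^'n"
  define u where "u = fourier_inv (ftd g)"
  have u_eq: "u w = c * I w" for w unfolding u_def fourier_inv_def c_def I_def by simp
  have gm[measurable]: "g \<in> borel_measurable borel" using g by auto
  have Gm[measurable]: "ftd g \<in> borel_measurable borel" using G by auto
  have Im[measurable]: "I \<in> borel_measurable borel" unfolding I_def by measurable
  have um[measurable]: "u \<in> borel_measurable borel"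
  proof -
    have "(\<lambda>w. c * I w) \<in> borel_measurable borel" by measurable
    thus ?thesis using u_eq by (simp add: fun_eq_iff[symmetric] u_eq[abs_def])
  qed
  define M where "M = (\<integral>\<xi>. norm (ftd g \<xi>) \<partial>lborel)"
  have Ib: "norm (I w) \<le> M" for w
  proof -
    have "norm (I w) \<le> (\<integral>\<xi>. norm (ftd g \<xi> * E (w \<bullet> \<xi>)) \<partial>lborel)"
      unfolding I_def by (rule integral_norm_bound)
    also have "\<dots> = M" unfolding M_def by (simp add: norm_mult)
    finally show ?thesis .
  qed
  define B where "B = norm c * M"
  have ub: "norm (u w) \<le> B" for w
    unfolding u_eq B_def norm_mult by (rule mult_left_mono[OF Ib]) simp
  have gK: "integrable lborel (\<lambda>w. g w * complex_of_real (Kd \<sigma> (a - w)))" if s: "\<sigma> > 0" for \<sigma> a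
  proof -
    have Kb: "Kd \<sigma> v \<le> Nd \<sigma> CARD('n)" for v :: "real^'n" using Kd_le[OF s, of v] by simp
    have Np: "Nd \<sigma> CARD('n) > 0" by (rule Nd_pos[OF s])
    show ?thesis
      by (rule Bochner_Integration.integrable_bound[where f="\<lambda>w. norm (g w) * Nd \<sigma> CARD('n)"])
         (use Np in \<open>auto simp: g norm_mult Kd_nonneg abs_mult intro!: mult_left_mono Kb\<close>)
  qed
  have uK: "integrable lborel (\<lambda>w. u w * complex_of_real (Kd \<sigma> (a - w)))" if s: "\<sigma> > 0" for \<sigma> a
  proof -
    have Bn: "B \<ge> 0" using ub[of 0] norm_ge_zero[of "u 0"] by linarith
    show ?thesis
      by (rule Bochner_Integration.integrable_bound[where f="\<lambda>w. B * Kd \<sigma> (a - w)"])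
         (use Bn in \<open>auto simp: norm_mult Kd_nonneg abs_mult ub intro!: integrable_mult_right Kd_shift_integrable s mult_right_mono\<close>)
  qed
  have key: "(\<integral>w. u w * complex_of_real (Kd \<sigma> (a - w)) \<partial>lborel) = (\<integral>w. g w * complex_of_real (Kd \<sigma> (a - w)) \<partial>lborel)"
    if s: "\<sigma> > 0" for \<sigma> a
  proof -
    have "(\<integral>w. u w * complex_of_real (Kd \<sigma> (a - w)) \<partial>lborel) = (\<integral>w. c * (I w * complex_of_real (Kd \<sigma> (a - w))) \<partial>lborel)"
      by (simp add: u_eq mult.assoc)
    also have "\<dots> = c * (\<integral>w. I w * complex_of_real (Kd \<sigma> (a - w)) \<partial>lborel)"
      by (rule integral_mult_right_zero)
    also have "(\<integral>w. I w * complex_of_real (Kd \<sigma> (a - w)) \<partial>lborel)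
        = (\<integral>\<xi>. ftd g \<xi> * E (a \<bullet> \<xi>) * complex_of_real (exp (- \<sigma>\<^sup>2 * Qd \<xi> / 2)) \<partial>lborel)"
      unfolding I_def by (rule S1[OF G s])
    also have "c * \<dots> = (\<integral>w. g w * complex_of_real (Kd \<sigma> (a - w)) \<partial>lborel)"
      unfolding c_def using S2[OF g s, of a] by simp
    finally show ?thesis .
  qed
  define H where "H w = (g w - u w) * complex_of_real (Kd 1 w)" for w
  have Hi: "integrable lborel H"
  proof -
    have "integrable lborel (\<lambda>w. g w * complex_of_real (Kd 1 (0 - w)) - u w * complex_of_real (Kd 1 (0 - w)))"
      by (intro Bochner_Integration.integrable_diff gK uK) simp_all
    moreover have "(\<lambda>w. g w * complex_of_real (Kd 1 (0 - w)) - u w * complex_of_real (Kd 1 (0 - w))) = H"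
      by (rule ext) (simp add: H_def algebra_simps)
    ultimately show ?thesis by simp
  qed
  have Hz: "(\<integral>w. H w * complex_of_real (Kd \<tau> (b - w)) \<partial>lborel) = 0" if t: "\<tau> > 0" for b \<tau>
  proof -
    define k where "k = 1 + \<tau>\<^sup>2"
    define \<sigma> where "\<sigma> = \<tau> / sqrt k"
    define C where "C = Nd 1 DIM(real^'n) * Nd \<tau> DIM(real^'n) / Nd \<sigma> DIM(real^'n) * exp (- Qd b / (2 * k))"
    define a where "a = (1 / k) *\<^sub>R b"
    have k0: "k > 0" unfolding k_def by (simp add: add_pos_nonneg)
    have s0: "\<sigma> > 0" unfolding \<sigma>_def using t k0 by simp
    have gp: "Kd 1 w * Kd \<tau> (b - w) = C * Kd \<sigma> (a - w)" for w :: "real^'n"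
      unfolding C_def a_def \<sigma>_def k_def by (rule gauss_prod[OF t])
    have "(\<integral>w. H w * complex_of_real (Kd \<tau> (b - w)) \<partial>lborel)
        = (\<integral>w. complex_of_real C * (g w * complex_of_real (Kd \<sigma> (a - w)) - u w * complex_of_real (Kd \<sigma> (a - w))) \<partial>lborel)"
    proof (rule Bochner_Integration.integral_cong[OF refl])
      fix w
      have "H w * complex_of_real (Kd \<tau> (b - w)) = (g w - u w) * complex_of_real (Kd 1 w * Kd \<tau> (b - w))"
        unfolding H_def by (simp add: mult.assoc)
      also have "\<dots> = (g w - u w) * complex_of_real (C * Kd \<sigma> (a - w))" by (simp only: gp)
      also have "\<dots> = complex_of_real C * (g w * complex_of_real (Kd \<sigma> (a - w)) - u w * complex_of_real (Kd \<sigma> (a - w)))"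
        by (simp add: algebra_simps)
      finally show "H w * complex_of_real (Kd \<tau> (b - w)) = \<dots>" .
    qed
    also have "\<dots> = complex_of_real C * (\<integral>w. g w * complex_of_real (Kd \<sigma> (a - w)) - u w * complex_of_real (Kd \<sigma> (a - w)) \<partial>lborel)"
      by (rule integral_mult_right_zero)
    also have "(\<integral>w. g w * complex_of_real (Kd \<sigma> (a - w)) - u w * complex_of_real (Kd \<sigma> (a - w)) \<partial>lborel) = 0"
      using Bochner_Integration.integral_diff[OF gK[OF s0] uK[OF s0], of a a] key[OF s0, of a] by simp
    finally show ?thesis by simp
  qed
  have "AE w in lborel. H w = 0"
    by (rule ae_zero_boxes[OF Hi]) (rule box_zero[OF Hi Hz])
  thus ?thesis
  proof eventually_elim
    case (elim w)
    have "complex_of_real (Kd 1 w) \<noteq> 0" using Kd_pos[of 1 w] by simp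
    hence "g w - u w = 0" using elim unfolding H_def by simp
    thus ?case unfolding u_def by simp
  qed
qed


definition ins :: "'n::finite \<Rightarrow> ('n \<Rightarrow> real) \<Rightarrow> real \<Rightarrow> real^'n" where
  "ins j u t = (\<chi> i. if i = j then t else u i)"

lemma ins_nth[simp]: "ins j u t $ i = (if i = j then t else u i)"
  unfolding ins_def by simp

lemma ins_sum: "ins j u t = t *\<^sub>R axis j 1 + (\<Sum>i\<in>UNIV-{j}. u i *\<^sub>R axis i 1)"
  by (auto simp: vec_eq_iff axis_def sum.delta' if_distrib cong: if_cong)

abbreviation PP :: "'n::finite \<Rightarrow> ('n \<Rightarrow> real) measure" where
  "PP j \<equiv> PiM (UNIV - {j}) (\<lambda>_. lborel)"

lemma PP_sigma_finite: "sigma_finite_measure (PP j)"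
proof -
  interpret product_sigma_finite "\<lambda>_::'n. lborel :: real measure" by standard
  show ?thesis by (rule sigma_finite) simp
qed

lemma pair_PP: "pair_sigma_finite (PP j) (lborel :: real measure)"
  unfolding pair_sigma_finite_def using PP_sigma_finite sigma_finite_lborel by blast

lemma ins_measurable[measurable]:
  "(\<lambda>p. ins j (fst p) (snd p)) \<in> borel_measurable (PP j \<Otimes>\<^sub>M lborel)"
proof -
  have "(\<lambda>p. snd p *\<^sub>R axis j 1 + (\<Sum>i\<in>UNIV-{j}. fst p i *\<^sub>R axis i (1::real))) \<in> borel_measurable (PP j \<Otimes>\<^sub>M lborel)"
  proof (intro borel_measurable_add borel_measurable_sum borel_measurable_scaleR borel_measurable_const)
    show "snd \<in> borel_measurable (PP j \<Otimes>\<^sub>M lborel)" by measurable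
    fix i assume i: "i \<in> UNIV - {j}"
    have "(\<lambda>x. x i) \<in> measurable (PP j) (lborel::real measure)"
      by (rule measurable_component_singleton) (use i in simp)
    hence "(\<lambda>x. x i) \<in> borel_measurable (PP j)" by simp
    thus "(\<lambda>p. fst p i) \<in> borel_measurable (PP j \<Otimes>\<^sub>M lborel)"
      by (rule measurable_compose[OF measurable_fst])
  qed
  thus ?thesis by (simp add: ins_sum)
qed

lemma prod_Basis_vec: "(\<Prod>b\<in>(Basis :: (real^'n::finite) set). f b) = (\<Prod>i\<in>UNIV. f (axis i 1))"
proof -
  have e: "(Basis :: (real^'n) set) = (\<lambda>i. axis i 1) ` UNIV"
    by (auto simp: Basis_vec_def)
  have i: "inj_on (\<lambda>i::'n. axis i (1::real)) UNIV"
    by (auto simp: inj_on_def axis_eq_axis)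
  have "(\<Prod>b\<in>(Basis :: (real^'n::finite) set). f b) = (\<Prod>b\<in>(\<lambda>i. axis i 1) ` UNIV. f b)"
    by (simp only: e)
  also have "\<dots> = (\<Prod>i\<in>UNIV. f (axis i 1))"
    using prod.reindex[OF i, of f] by (simp add: o_def)
  finally show ?thesis .
qed

lemma lborel_ins: "(lborel :: (real^'n::finite) measure) = distr (PP j \<Otimes>\<^sub>M lborel) borel (\<lambda>p. ins j (fst p) (snd p))"
proof (rule lborel_eqI)
  show "sets (distr (PP j \<Otimes>\<^sub>M lborel) borel (\<lambda>p. ins j (fst p) (snd p))) = sets borel" by simp
  fix l r :: "real^'n"
  assume le: "\<And>b. b \<in> Basis \<Longrightarrow> l \<bullet> b \<le> r \<bullet> b"
  have lei: "l $ i \<le> r $ i" for i using le[of "axis i 1"] by (simp add: inner_axis)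
  let ?A = "PiE (UNIV - {j}) (\<lambda>i. {l$i<..<r$i})" and ?B = "{l$j<..<r$j}"
  have pre: "(\<lambda>p. ins j (fst p) (snd p)) -` box l r \<inter> space (PP j \<Otimes>\<^sub>M lborel) = ?A \<times> ?B"
  proof (intro set_eqI iffI)
    fix p assume "p \<in> (\<lambda>p. ins j (fst p) (snd p)) -` box l r \<inter> space (PP j \<Otimes>\<^sub>M lborel)"
    hence b: "ins j (fst p) (snd p) \<in> box l r" and s: "fst p \<in> space (PP j)"
      by (auto simp: space_pair_measure)
    from b have "\<forall>i. l$i < (if i = j then snd p else fst p i) \<and> (if i = j then snd p else fst p i) < r$i"
      by (simp add: mem_box_cart)
    moreover from s have "fst p \<in> extensional (UNIV - {j})" by (simp add: space_PiM PiE_def)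
    ultimately show "p \<in> ?A \<times> ?B"
      by (cases p) (auto simp: PiE_def Pi_def split: if_splits; metis)
  next
    fix p assume p: "p \<in> ?A \<times> ?B"
    hence "ins j (fst p) (snd p) \<in> box l r" by (cases p) (auto simp: mem_box_cart PiE_def Pi_def)
    moreover from p have "fst p \<in> space (PP j)" by (cases p) (auto simp: space_PiM PiE_def Pi_def)
    ultimately show "p \<in> (\<lambda>p. ins j (fst p) (snd p)) -` box l r \<inter> space (PP j \<Otimes>\<^sub>M lborel)"
      by (cases p) (auto simp: space_pair_measure)
  qed
  have "emeasure (distr (PP j \<Otimes>\<^sub>M lborel) borel (\<lambda>p. ins j (fst p) (snd p))) (box l r)
      = emeasure (PP j \<Otimes>\<^sub>M lborel) (?A \<times> ?B)"
    by (subst emeasure_distr) (simp_all add: pre)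
  also have "\<dots> = emeasure (PP j) ?A * emeasure lborel ?B"
  proof (rule sigma_finite_measure.emeasure_pair_measure_Times[OF sigma_finite_lborel])
    show "?A \<in> sets (PP j)" by (rule sets_PiM_I_finite) auto
  qed simp
  also have "emeasure (PP j) ?A = (\<Prod>i\<in>UNIV - {j}. emeasure lborel {l$i<..<r$i})"
  proof -
    interpret product_sigma_finite "\<lambda>_::'n. lborel :: real measure" by standard
    show ?thesis by (rule emeasure_PiM) auto
  qed
  also have "(\<Prod>i\<in>UNIV - {j}. emeasure lborel {l$i<..<r$i}) * emeasure lborel ?B
      = ennreal (\<Prod>i\<in>UNIV. r$i - l$i)"
  proof -
    have "(\<Prod>i\<in>UNIV - {j}. emeasure lborel {l$i<..<r$i}) = ennreal (\<Prod>i\<in>UNIV - {j}. r$i - l$i)"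
      using lei by (simp add: prod_ennreal)
    moreover have "emeasure lborel ?B = ennreal (r$j - l$j)" using lei by simp
    moreover have "(\<Prod>i\<in>UNIV. r$i - l$i) = (r$j - l$j) * (\<Prod>i\<in>UNIV - {j}. r$i - l$i)"
      by (simp add: prod.remove)
    ultimately show ?thesis using lei
      by (simp add: ennreal_mult'[symmetric] prod_nonneg mult.commute)
  qed
  also have "(\<Prod>i\<in>UNIV. r$i - l$i) = (\<Prod>b\<in>Basis. (r - l) \<bullet> b)"
    by (simp add: prod_Basis_vec inner_axis)
  finally show "emeasure (distr (PP j \<Otimes>\<^sub>M lborel) borel (\<lambda>p. ins j (fst p) (snd p))) (box l r) = (\<Prod>b\<in>Basis. (r - l) \<bullet> b)" .
qed


lemma comp_meas:
  assumes i: "i \<noteq> j"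
  shows "(\<lambda>p. fst p i) \<in> borel_measurable (PP j \<Otimes>\<^sub>M lborel)"
proof -
  have "(\<lambda>x. x i) \<in> measurable (PP j) (lborel::real measure)"
    by (rule measurable_component_singleton) (use i in simp)
  hence "(\<lambda>x. x i) \<in> borel_measurable (PP j)" by simp
  thus ?thesis by (rule measurable_compose[OF measurable_fst])
qed

lemma ins_measurable_gen:
  assumes f: "f \<in> borel_measurable (PP j \<Otimes>\<^sub>M lborel)"
  shows "(\<lambda>p. ins j (fst p) (f p)) \<in> borel_measurable (PP j \<Otimes>\<^sub>M lborel)"
proof -
  have "(\<lambda>p. f p *\<^sub>R axis j 1 + (\<Sum>i\<in>UNIV-{j}. fst p i *\<^sub>R axis i (1::real))) \<in> borel_measurable (PP j \<Otimes>\<^sub>M lborel)"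
    by (intro borel_measurable_add borel_measurable_sum borel_measurable_scaleR borel_measurable_const f comp_meas) auto
  thus ?thesis by (simp add: ins_sum)
qed

lemma s_meas:
  "(\<lambda>p. \<Sum>l\<in>UNIV - {j}. (x::real^'n::finite) $ l * fst p l) \<in> borel_measurable (PP j \<Otimes>\<^sub>M lborel)"
  by (intro borel_measurable_sum borel_measurable_times borel_measurable_const comp_meas) auto

lemma inner_ins: "x \<bullet> ins j u t = x $ j * t + (\<Sum>l\<in>UNIV - {j}. x $ l * u l)"
proof -
  have "x \<bullet> ins j u t = (\<Sum>i\<in>UNIV. x $ i * ins j u t $ i)" by (simp add: inner_vec_def)
  also have "\<dots> = x $ j * ins j u t $ j + (\<Sum>i\<in>UNIV - {j}. x $ i * ins j u t $ i)"
    by (rule sum.remove) auto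
  also have "(\<Sum>i\<in>UNIV - {j}. x $ i * ins j u t $ i) = (\<Sum>l\<in>UNIV - {j}. x $ l * u l)"
    by (rule sum.cong) auto
  finally show ?thesis by simp
qed


abbreviation em :: "real \<Rightarrow> complex" where "em t \<equiv> exp (- \<i> * complex_of_real t)"

lemma norm_em[simp]: "norm (em t) = 1" by (simp add: norm_exp_eq_Re)

lemma slice_core:
  fixes g :: "real^'n::finite \<Rightarrow> complex" and x :: "real^'n"
  assumes g: "integrable lborel g" and xj: "x $ j \<noteq> 0"
  shows "(\<integral>k. complex_of_real (1 / \<bar>x $ j\<bar>) *
            (\<integral>u. g (ins j u ((k - (\<Sum>l\<in>UNIV - {j}. x $ l * u l)) / x $ j)) \<partial>PP j) * em k \<partial>lborel)
       = (\<integral>y. g y * em (x \<bullet> y) \<partial>lborel)"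
proof -
  define c where "c = x $ j"
  have c0: "c \<noteq> 0" using xj c_def by simp
  define s where "s u = (\<Sum>l\<in>UNIV - {j}. x $ l * u l)" for u :: "'n \<Rightarrow> real"
  define G where "G u k = g (ins j u ((k - s u) / c))" for u k
  define F where "F u t = g (ins j u t) * em (c * t + s u)" for u t
  interpret P: pair_sigma_finite "PP j" "lborel :: real measure" by (rule pair_PP)
  have gm[measurable]: "g \<in> borel_measurable borel" using g by auto
  have sm: "(\<lambda>p. s (fst p)) \<in> borel_measurable (PP j \<Otimes>\<^sub>M lborel)"
    unfolding s_def by (rule s_meas)
  have insm: "(\<lambda>p. ins j (fst p) (snd p)) \<in> borel_measurable (PP j \<Otimes>\<^sub>M lborel)" by (rule ins_measurable)
  have Fm: "(\<lambda>(u, t). F u t) \<in> borel_measurable (PP j \<Otimes>\<^sub>M lborel)"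
  proof -
    have "(\<lambda>p. g (ins j (fst p) (snd p)) * em (c * snd p + s (fst p))) \<in> borel_measurable (PP j \<Otimes>\<^sub>M lborel)"
      using measurable_compose[OF insm gm] sm by measurable
    thus ?thesis unfolding F_def by (simp add: case_prod_beta')
  qed
  have Gm: "(\<lambda>(u, k). G u k) \<in> borel_measurable (PP j \<Otimes>\<^sub>M lborel)"
  proof -
    have "(\<lambda>p. (snd p - s (fst p)) / c) \<in> borel_measurable (PP j \<Otimes>\<^sub>M lborel)"
      using sm by measurable
    from ins_measurable_gen[OF this] have "(\<lambda>p. ins j (fst p) ((snd p - s (fst p)) / c)) \<in> borel_measurable (PP j \<Otimes>\<^sub>M lborel)" .
    from measurable_compose[OF this gm] show ?thesis unfolding G_def by (simp add: case_prod_beta')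
  qed
  have fi: "integrable lborel (\<lambda>y. g y * em (x \<bullet> y))"
    by (rule Bochner_Integration.integrable_bound[OF g]) (auto simp: norm_mult)
  have fm: "(\<lambda>y. g y * em (x \<bullet> y)) \<in> borel_measurable borel" by measurable
  have A: "(\<integral>y. g y * em (x \<bullet> y) \<partial>lborel) = (\<integral>p. (\<lambda>(u, t). F u t) p \<partial>(PP j \<Otimes>\<^sub>M lborel))"
  proof -
    have "(\<integral>y. g y * em (x \<bullet> y) \<partial>lborel) = (\<integral>y. g y * em (x \<bullet> y) \<partial>(distr (PP j \<Otimes>\<^sub>M lborel) borel (\<lambda>p. ins j (fst p) (snd p))))"
      by (simp flip: lborel_ins)
    also have "\<dots> = (\<integral>p. g (ins j (fst p) (snd p)) * em (x \<bullet> ins j (fst p) (snd p)) \<partial>(PP j \<Otimes>\<^sub>M lborel))"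
      by (rule integral_distr[OF insm]) (simp add: fm)
    also have "\<dots> = (\<integral>p. (\<lambda>(u, t). F u t) p \<partial>(PP j \<Otimes>\<^sub>M lborel))"
      by (rule Bochner_Integration.integral_cong[OF refl]) (auto simp: F_def inner_ins c_def s_def)
    finally show ?thesis .
  qed
  have B: "integrable (PP j \<Otimes>\<^sub>M lborel) (\<lambda>(u, t). F u t)"
  proof -
    have "integrable (distr (PP j \<Otimes>\<^sub>M lborel) borel (\<lambda>p. ins j (fst p) (snd p))) (\<lambda>y. g y * em (x \<bullet> y))"
      using fi by (simp flip: lborel_ins)
    hence "integrable (PP j \<Otimes>\<^sub>M lborel) (\<lambda>p. g (ins j (fst p) (snd p)) * em (x \<bullet> ins j (fst p) (snd p)))"
      by (subst (asm) integrable_distr_eq[OF insm fm])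
    moreover have "(\<lambda>p. g (ins j (fst p) (snd p)) * em (x \<bullet> ins j (fst p) (snd p))) = (\<lambda>(u, t). F u t)"
      by (auto simp: fun_eq_iff F_def inner_ins c_def s_def)
    ultimately show ?thesis by simp
  qed
  have C: "(\<integral>p. (\<lambda>(u, t). F u t) p \<partial>(PP j \<Otimes>\<^sub>M lborel)) = (\<integral>u. (\<integral>t. F u t \<partial>lborel) \<partial>PP j)"
    by (rule P.integral_fst[OF B, symmetric])
  have D: "(\<integral>t. F u t \<partial>lborel) = complex_of_real (1 / \<bar>c\<bar>) * (\<integral>k. G u k * em k \<partial>lborel)" for u
  proof -
    have "(\<integral>t. F u t \<partial>lborel) = \<bar>1/c\<bar> *\<^sub>R (\<integral>k. F u (- s u / c + (1/c) * k) \<partial>lborel)"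
      by (rule lborel_integral_real_affine) (use c0 in simp)
    also have "(\<lambda>k. F u (- s u / c + (1/c) * k)) = (\<lambda>k. G u k * em k)"
    proof
      fix k
      have a: "- s u / c + (1/c) * k = (k - s u) / c" using c0 by (simp add: field_simps)
      have b: "c * ((k - s u) / c) + s u = k" using c0 by (simp add: field_simps)
      show "F u (- s u / c + (1/c) * k) = G u k * em k" unfolding F_def G_def a b ..
    qed
    finally show ?thesis by (simp add: scaleR_conv_of_real)
  qed
  have nF: "norm (F u t) = norm (g (ins j u t))" for u t by (simp add: F_def norm_mult)
  have H: "integrable (PP j \<Otimes>\<^sub>M lborel) (\<lambda>(u, k). G u k * em k)"
  proof (rule P.Fubini_integrable)
    show "(\<lambda>(u, k). G u k * em k) \<in> borel_measurable (PP j \<Otimes>\<^sub>M lborel)"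
      using Gm by measurable
    have "integrable (PP j \<Otimes>\<^sub>M lborel) (\<lambda>(u, t). norm (F u t))"
      using B by (simp add: integrable_norm case_prod_beta')
    hence "integrable (PP j) (\<lambda>u. \<integral>t. norm (F u t) \<partial>lborel)"
      by (rule P.integrable_fst)
    hence "integrable (PP j) (\<lambda>u. \<bar>c\<bar> * (\<integral>t. norm (F u t) \<partial>lborel))"
      by (rule integrable_mult_right)
    moreover have "(\<integral>k. norm (case (u, k) of (u, k) \<Rightarrow> G u k * em k) \<partial>lborel) = \<bar>c\<bar> * (\<integral>t. norm (F u t) \<partial>lborel)" for u
    proof -
      have "(\<integral>k. norm (case (u, k) of (u, k) \<Rightarrow> G u k * em k) \<partial>lborel) = (\<integral>k. norm (G u k) \<partial>lborel)"
        by (simp add: norm_mult)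
      also have "\<dots> = \<bar>c\<bar> *\<^sub>R (\<integral>t. norm (G u (s u + c * t)) \<partial>lborel)"
        by (rule lborel_integral_real_affine[OF c0])
      also have "(\<lambda>t. norm (G u (s u + c * t))) = (\<lambda>t. norm (F u t))"
        using c0 by (auto simp: fun_eq_iff G_def nF)
      finally show ?thesis by simp
    qed
    ultimately show "integrable (PP j) (\<lambda>u. \<integral>k. norm (case (u, k) of (u, k) \<Rightarrow> G u k * em k) \<partial>lborel)"
      by simp
    have "AE u in PP j. integrable lborel (\<lambda>t. F u t)"
      by (rule P.AE_integrable_fst[OF B])
    with AE_space show "AE u in PP j. integrable lborel (\<lambda>k. case (u, k) of (u, k) \<Rightarrow> G u k * em k)"
    proof eventually_elim
      case (elim u)
      have "(\<lambda>y. (\<lambda>p. g (ins j (fst p) (snd p))) (u, y)) \<in> borel_measurable lborel"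
        by (rule measurable_Pair2[OF measurable_compose[OF insm gm]]) (use elim in auto)
      hence mg: "(\<lambda>t. g (ins j u t)) \<in> borel_measurable lborel" by simp
      have "integrable lborel (\<lambda>t. g (ins j u t))"
        by (rule Bochner_Integration.integrable_bound[where f="\<lambda>t. F u t"]) (use elim mg in \<open>auto simp: nF\<close>)
      hence "integrable lborel (\<lambda>k. g (ins j u (- s u / c + (1/c) * k)))"
        using lborel_integrable_real_affine_iff[of "1/c" "\<lambda>t. g (ins j u t)" "- s u / c"] c0 by simp
      moreover have "(\<lambda>k. g (ins j u (- s u / c + (1/c) * k))) = G u"
        using c0 by (auto simp: fun_eq_iff G_def field_simps)
      ultimately have iG: "integrable lborel (G u)" by simp
      have mG[measurable]: "G u \<in> borel_measurable borel" using iG by auto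
      have "integrable lborel (\<lambda>k. G u k * em k)"
        by (rule Bochner_Integration.integrable_bound[OF iG]) (auto simp: norm_mult)
      thus ?case by simp
    qed
  qed
  have E: "(\<integral>k. (\<integral>u. G u k * em k \<partial>PP j) \<partial>lborel) = (\<integral>u. (\<integral>k. G u k * em k \<partial>lborel) \<partial>PP j)"
    by (rule P.Fubini_integral[OF H])
  have "(\<integral>k. complex_of_real (1 / \<bar>x $ j\<bar>) * (\<integral>u. g (ins j u ((k - (\<Sum>l\<in>UNIV - {j}. x $ l * u l)) / x $ j)) \<partial>PP j) * em k \<partial>lborel)
      = (\<integral>k. complex_of_real (1 / \<bar>c\<bar>) * (\<integral>u. G u k * em k \<partial>PP j) \<partial>lborel)"
    by (rule Bochner_Integration.integral_cong[OF refl]) (simp add: G_def s_def c_def mult.assoc)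
  also have "\<dots> = complex_of_real (1 / \<bar>c\<bar>) * (\<integral>k. (\<integral>u. G u k * em k \<partial>PP j) \<partial>lborel)"
    by (rule integral_mult_right_zero)
  also have "\<dots> = complex_of_real (1 / \<bar>c\<bar>) * (\<integral>u. (\<integral>k. G u k * em k \<partial>lborel) \<partial>PP j)"
    by (simp only: E)
  also have "\<dots> = (\<integral>u. complex_of_real (1 / \<bar>c\<bar>) * (\<integral>k. G u k * em k \<partial>lborel) \<partial>PP j)"
    by (rule integral_mult_right_zero[symmetric])
  also have "\<dots> = (\<integral>u. (\<integral>t. F u t \<partial>lborel) \<partial>PP j)"
    by (simp only: D)
  also have "\<dots> = (\<integral>y. g y * em (x \<bullet> y) \<partial>lborel)"
    unfolding A C ..
  finally show ?thesis .
qed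


lemma radon_fourier:
  fixes g :: "real^'n::finite \<Rightarrow> complex"
  assumes g: "integrable lborel g" and x: "x \<noteq> 0"
  shows "fourier1 (radon g x) 1 = ftd g x"
proof -
  define j where "j = (SOME j. x $ j \<noteq> 0)"
  have "\<exists>j. x $ j \<noteq> 0" using x by (auto simp: vec_eq_iff)
  hence xj: "x $ j \<noteq> 0" unfolding j_def by (rule someI_ex)
  have r: "radon g x k = complex_of_real (1 / \<bar>x $ j\<bar>) *
            (\<integral>u. g (ins j u ((k - (\<Sum>l\<in>UNIV - {j}. x $ l * u l)) / x $ j)) \<partial>PP j)" for k
    unfolding radon_def using x by (simp add: j_def[symmetric] Let_def ins_def)
  have "fourier1 (radon g x) 1 = (\<integral>k. complex_of_real (1 / \<bar>x $ j\<bar>) *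
            (\<integral>u. g (ins j u ((k - (\<Sum>l\<in>UNIV - {j}. x $ l * u l)) / x $ j)) \<partial>PP j) * em k \<partial>lborel)"
    unfolding fourier1_def r by simp
  also have "\<dots> = (\<integral>y. g y * em (x \<bullet> y) \<partial>lborel)" by (rule slice_core[OF g xj])
  also have "\<dots> = ftd g x" unfolding ftd_def by simp
  finally show ?thesis .
qed

lemma fourier_inv_uminus: "fourier_inv (\<lambda>x. - G x) w = - fourier_inv G w"
  unfolding fourier_inv_def by simp

lemma fourier_inv_cmult: "fourier_inv (\<lambda>x. c * G x) w = c * fourier_inv G w"
  unfolding fourier_inv_def by (simp add: integral_mult_right_zero[symmetric] mult_ac del: integral_mult_right_zero)

theorem mainTheorem8:
  fixes F :: "real^'n::finite \<Rightarrow> real \<Rightarrow> real"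
  assumes A: "assumptionA F"
    and AHa: "classAHa F"
    and L1k: "\<And>x. integrable lborel (F x)"
    and L1x: "integrable lborel (\<lambda>x. fourier1 (\<lambda>k. complex_of_real (F x k)) 1)"
  defines "f \<equiv> (\<lambda>w. - (1/2) * fourier_inv (\<lambda>x. fourier1 (\<lambda>k. complex_of_real (F x k)) 1) w)"
  shows "(\<forall>\<phi>\<in>schwartz_even. T_F F \<phi> = (\<integral>w. \<phi> w * f w \<partial>lborel))
    \<and> (\<forall>n. (\<forall>x. Cn n (F x) \<and> (\<forall>j\<le>n. integrable lborel ((deriv ^^ j) (F x)))) \<longrightarrow>
          (\<forall>w. f w = - (1/2) * fourier_inv (\<lambda>x. fourier1
                 (\<lambda>k. (- \<i>) ^ n * complex_of_real ((deriv ^^ n) (F x) k)) 1) w)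
          \<and> (n = 2 \<longrightarrow> (\<forall>w. f w = (1/2) * fourier_inv (\<lambda>x. fourier1
                 (\<lambda>k. complex_of_real ((deriv ^^ 2) (F x) k)) 1) w)))
    \<and> (\<forall>g :: real^'n \<Rightarrow> complex.
          ((\<forall>x k. F x differentiable (at k) \<and> deriv (F x) differentiable (at k))
           \<and> (\<forall>x. integrable lborel (deriv (F x)) \<and> integrable lborel (deriv (deriv (F x))))
           \<and> integrable lborel g
           \<and> (\<forall>x k. complex_of_real ((1/2) * deriv (deriv (F x)) k) = radon g x k))
          \<longrightarrow> (AE w in lborel. f w = g w))"
proof (intro conjI allI impI ballI)
  let ?G = "\<lambda>x. fourier1 (\<lambda>k. complex_of_real (F x k)) 1"
  fix \<phi> :: "real^'n \<Rightarrow> complex" assume "\<phi> \<in> schwartz_even"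
  hence \<phi>: "\<phi> \<in> schwartz" unfolding schwartz_even_def by simp
  show "T_F F \<phi> = (\<integral>w. \<phi> w * f w \<partial>lborel)"
    unfolding T_F_def f_def using part_i[OF L1x \<phi>] by simp
next
  fix n :: nat and w
  assume H: "\<forall>x. Cn n (F x) \<and> (\<forall>j\<le>n. integrable lborel ((deriv ^^ j) (F x)))"
  have eq: "(\<lambda>x. fourier1 (\<lambda>k. (- \<i>) ^ n * complex_of_real ((deriv ^^ n) (F x) k)) 1)
      = (\<lambda>x. fourier1 (\<lambda>k. complex_of_real (F x k)) 1)"
    using part_ii_pointwise H by (intro ext) blast
  show "f w = - (1/2) * fourier_inv (\<lambda>x. fourier1
                 (\<lambda>k. (- \<i>) ^ n * complex_of_real ((deriv ^^ n) (F x) k)) 1) w"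
    unfolding f_def eq by simp
next
  fix n :: nat and w
  assume H: "\<forall>x. Cn n (F x) \<and> (\<forall>j\<le>n. integrable lborel ((deriv ^^ j) (F x)))"
    and n2: "n = 2"
  have eq: "(\<lambda>x. fourier1 (\<lambda>k. (- \<i>) ^ n * complex_of_real ((deriv ^^ n) (F x) k)) 1)
      = (\<lambda>x. fourier1 (\<lambda>k. complex_of_real (F x k)) 1)"
    using part_ii_pointwise H by (intro ext) blast
  have "(\<lambda>x. fourier1 (\<lambda>k. (- \<i>) ^ n * complex_of_real ((deriv ^^ n) (F x) k)) 1)
     = (\<lambda>x. - fourier1 (\<lambda>k. complex_of_real ((deriv ^^ 2) (F x) k)) 1)"
    unfolding n2 by (intro ext) (simp add: fourier1_cmult[of "-1", simplified])
  hence "(\<lambda>x. fourier1 (\<lambda>k. complex_of_real (F x k)) 1) = (\<lambda>x. - fourier1 (\<lambda>k. complex_of_real ((deriv ^^ 2) (F x) k)) 1)"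
    using eq by simp
  thus "f w = (1/2) * fourier_inv (\<lambda>x. fourier1 (\<lambda>k. complex_of_real ((deriv ^^ 2) (F x) k)) 1) w"
    unfolding f_def by (simp add: fourier_inv_uminus)
next
  fix g :: "real^'n \<Rightarrow> complex"
  assume H: "(\<forall>x k. F x differentiable (at k) \<and> deriv (F x) differentiable (at k))
           \<and> (\<forall>x. integrable lborel (deriv (F x)) \<and> integrable lborel (deriv (deriv (F x))))
           \<and> integrable lborel g
           \<and> (\<forall>x k. complex_of_real ((1/2) * deriv (deriv (F x)) k) = radon g x k)"
  from H have
    H1: "\<forall>x k. F x differentiable (at k) \<and> deriv (F x) differentiable (at k)"
    and H2: "\<forall>x. integrable lborel (deriv (F x)) \<and> integrable lborel (deriv (deriv (F x)))"
    and g: "integrable lborel g"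
    and H4: "\<forall>x k. complex_of_real ((1/2) * deriv (deriv (F x)) k) = radon g x k"
    by blast+
  let ?G = "\<lambda>x. fourier1 (\<lambda>k. complex_of_real (F x k)) 1"
  have Gx: "?G x = - 2 * ftd g x" if x: "x \<noteq> 0" for x
  proof -
    have d1: "(F x has_real_derivative deriv (F x) k) (at k)" for k
      using H1 DERIV_deriv_iff_real_differentiable by blast
    have d2: "(deriv (F x) has_real_derivative deriv (deriv (F x)) k) (at k)" for k
      using H1 DERIV_deriv_iff_real_differentiable by blast
    have f1: "fourier1 (\<lambda>k. complex_of_real (deriv (F x) k)) 1 = \<i> * ?G x"
      by (rule fourier1_deriv[OF d1]) (use H2 L1k in auto)
    have f2: "fourier1 (\<lambda>k. complex_of_real (deriv (deriv (F x)) k)) 1 = \<i> * fourier1 (\<lambda>k. complex_of_real (deriv (F x) k)) 1"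
      by (rule fourier1_deriv[OF d2]) (use H2 in auto)
    have "(\<lambda>k. complex_of_real (deriv (deriv (F x)) k)) = (\<lambda>k. 2 * radon g x k)"
    proof
      fix k
      have r: "complex_of_real ((1/2) * deriv (deriv (F x)) k) = radon g x k" using H4 by blast
      have e: "complex_of_real (deriv (deriv (F x)) k) = 2 * complex_of_real ((1/2) * deriv (deriv (F x)) k)" by simp
      show "complex_of_real (deriv (deriv (F x)) k) = 2 * radon g x k"
        unfolding e r ..
    qed
    hence "fourier1 (\<lambda>k. complex_of_real (deriv (deriv (F x)) k)) 1 = 2 * ftd g x"
      using fourier1_cmult[of 2 "radon g x" 1] radon_fourier[OF g x] by simp
    with f1 f2 show ?thesis by (simp add: algebra_simps)
  qed
  have Gm: "?G \<in> borel_measurable borel" using L1x by auto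
  have gm[measurable]: "g \<in> borel_measurable borel" using g by auto
  have ftdm[measurable]: "ftd g \<in> borel_measurable borel" unfolding ftd_def by measurable
  have ae: "AE x in lborel. ftd g x = - (1/2) * ?G x"
    using AE_lborel_singleton[of 0] by eventually_elim (simp add: Gx)
  have Gi: "integrable lborel (ftd g)"
  proof -
    have "integrable lborel (\<lambda>x. - (1/2) * ?G x)" using L1x by simp
    thus ?thesis by (rule integrable_cong_AE_imp) (use ae ftdm in \<open>auto elim: AE_mp\<close>)
  qed
  have fw: "f w = fourier_inv (ftd g) w" for w
  proof -
    have "(\<integral>\<xi>. ?G \<xi> * exp (\<i> * complex_of_real (w \<bullet> \<xi>)) \<partial>lborel) = (\<integral>\<xi>. (- 2) * (ftd g \<xi> * exp (\<i> * complex_of_real (w \<bullet> \<xi>))) \<partial>lborel)"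
    proof (rule integral_cong_AE)
      show "(\<lambda>\<xi>. ?G \<xi> * exp (\<i> * complex_of_real (w \<bullet> \<xi>))) \<in> borel_measurable lborel"
        using Gm by measurable
      show "(\<lambda>\<xi>. (- 2) * (ftd g \<xi> * exp (\<i> * complex_of_real (w \<bullet> \<xi>)))) \<in> borel_measurable lborel"
        by measurable
      show "AE \<xi> in lborel. ?G \<xi> * exp (\<i> * complex_of_real (w \<bullet> \<xi>)) = (- 2) * (ftd g \<xi> * exp (\<i> * complex_of_real (w \<bullet> \<xi>)))"
        using ae by eventually_elim simp
    qed
    thus ?thesis unfolding f_def fourier_inv_def by simp
  qed
  show "AE w in lborel. f w = g w"
    using fourier_inversion[OF g Gi] by eventually_elim (simp add: fw)
qed


end
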